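(* Let $\mathcal{H}$ be a Hilbert space with inner product $\langle\cdot,\cdot\rangle$ and let $\mathcal{A}:\mathcal{H}\to\mathcal{H}$ be a densely defined, possibly unbounded, self-adjoint operator. Let $Q\subset\mathcal{H}$ be a $k$-dimensional subspace ($k\ge2$) of the domain of $\mathcal{A}$ with orthonormal basis $q_1,\ldots,q_k$; let $A_1\in\mathbb{C}^{k\times k}$ have entries $\langle q_i,\mathcal{A}q_j\rangle$, with eigendecomposition $A_1=\Omega\,\mathrm{diag}(\widehat\lambda_1,\ldots,\widehat\lambda_k)\Omega^*$, and let $\widehat u_1,\ldots,\widehat u_k$ be the Ritz vectors $[q_1,\ldots,q_k]\Omega$. Let $(\widehat\lambda,\widehat u)=(\widehat\lambda_1,\widehat u_1)$, $Q_1=\mathrm{span}(\widehat u_1)$, $Q_2=\mathrm{span}(\widehat u_2,\ldots,\widehat u_k)$, $Q_3=Q^\perp$, let $\mathcal{P}_j$ be the orthogonal projector onto $Q_j$, $\mathcal{P}_{2,i}$ the orthogonal projector onto $\mathrm{span}(\widehat u_i)$ ($i=2,\ldots,k$), and $\mathcal{A}_{jl}=\mathcal{P}_j\mathcal{A}\mathcal{P}_l$. Set $\|R\|=\|\mathcal{A}_{31}+\mathcal{A}_{32}\|$, $\|R_1\|=\|\mathcal{A}_{31}\|$, $\|R_2\|=\|\mathcal{A}_{32}\|$, $\|r_i\|=\|\mathcal{A}_{32}\mathcal{P}_{2,i}\|$. Suppose $\mathcal{A}u=\lambda u$ with $\|u\|=1$, and define $\mathrm{gap}=\min|\lambda-\lambda(\mathcal{A}_{22})|$,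 $\mathrm{Gap}=\min|\lambda-\lambda(\mathcal{A}_{33})|$. Then $$\sin\angle(u,\widehat u)\le\frac{\|R\|}{\mathrm{Gap}}\sqrt{1+\frac{\|R_2\|^2}{\mathrm{gap}^2}}\ \le\ \frac{\|R\|}{\mathrm{Gap}}\Big(1+\frac{\|R_2\|}{\mathrm{gap}}\Big).$$ Moreover, if $\mathrm{Gap}>\|R_2\|^2/\mathrm{gap}$, then $$\sin\angle(u,\widehat u)\le\frac{\|R_1\|}{\mathrm{Gap}-\frac{\|R_2\|^2}{\mathrm{gap}}}\sqrt{1+\frac{\|R_2\|^2}{\mathrm{gap}^2}},$$ and if $\mathrm{Gap}>\sum_{i=2}^k\frac{\|r_i\|^2}{|\lambda-\widehat\lambda_i|}$, then $$\sin\angle(u,\widehat u)\le\frac{\|R_1\|}{\mathrm{Gap}-\sum_{i=2}^k\frac{\|r_i\|^2}{|\lambda-\widehat\lambda_i|}}\sqrt{1+\Big(\sum_{i=2}^k\frac{\|r_i\|}{|\lambda-\widehat\lambda_i|}\Big)^2}.$$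
   Context: $\|\cdot\|$ denotes the norm of $\mathcal{H}$ and the operator norm. $\lambda(\mathcal{A}_{jj})$ denotes the spectrum of the restriction of $\mathcal{A}_{jj}$ to $Q_j$, and $\min|\lambda-\lambda(\mathcal{A}_{jj})|$ is the distance from $\lambda$ to that spectrum. For unit vectors, $\angle(u,\widehat u)=\arccos|\langle\widehat u,u\rangle|$. A bound with a vanishing denominator is interpreted as $+\infty$. *)

theory Defs
  imports "HOL-Analysis.Analysis"
begin

class complex_vector = real_vector +
  fixes scaleC :: "complex \<Rightarrow> 'a \<Rightarrow> 'a" (infixr \<open>*\<^sub>C\<close> 75)
  assumes scaleC_add_right: "a *\<^sub>C (x + y) = a *\<^sub>C x + a *\<^sub>C y"
    and scaleC_add_left: "(a + b) *\<^sub>C x = a *\<^sub>C x + b *\<^sub>C x"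
    and scaleC_scaleC: "a *\<^sub>C (b *\<^sub>C x) = (a * b) *\<^sub>C x"
    and scaleC_one: "1 *\<^sub>C x = x"
    and scaleR_scaleC: "scaleR r x = complex_of_real r *\<^sub>C x"

class complex_inner = complex_vector + real_normed_vector +
  fixes cinner :: "'a \<Rightarrow> 'a \<Rightarrow> complex"
  assumes cinner_commute: "cinner x y = cnj (cinner y x)"
    and cinner_add_right: "cinner x (y + z) = cinner x y + cinner x z"
    and cinner_scaleC_right: "cinner x (a *\<^sub>C y) = a * cinner x y"
    and cinner_ge_zero: "0 \<le> Re (cinner x x)"
    and cinner_eq_zero_iff: "cinner x x = 0 \<longleftrightarrow> x = 0"
    and norm_eq_sqrt_cinner: "norm x = sqrt (Re (cinner x x))"

text \<open>A (complex) Hilbert space is a type of class of class complex_inner and complete_space.\<close>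

definition csubspace :: "'a::complex_vector set \<Rightarrow> bool" where
  "csubspace S \<longleftrightarrow> 0 \<in> S \<and> (\<forall>x\<in>S. \<forall>y\<in>S. x + y \<in> S) \<and> (\<forall>a. \<forall>x\<in>S. a *\<^sub>C x \<in> S)"

definition cspan :: "'a::complex_vector set \<Rightarrow> 'a set" where
  "cspan S = {x. \<exists>F c. finite F \<and> F \<subseteq> S \<and> x = (\<Sum>v\<in>F. c v *\<^sub>C v)}"

definition orth_compl :: "'a::complex_inner set \<Rightarrow> 'a set" where
  "orth_compl S = {x. \<forall>y\<in>S. cinner y x = 0}"

definition orth_proj :: "'a::complex_inner set \<Rightarrow> 'a \<Rightarrow> 'a" where
  "orth_proj S x = (THE p. p \<in> S \<and> (\<forall>s\<in>S. cinner s (x - p) = 0))"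

definition densely_defined_linear :: "'a::complex_inner set \<Rightarrow> ('a \<Rightarrow> 'a) \<Rightarrow> bool" where
  "densely_defined_linear D A \<longleftrightarrow> csubspace D \<and> closure D = UNIV \<and>
     (\<forall>x\<in>D. \<forall>y\<in>D. \<forall>a b. A (a *\<^sub>C x + b *\<^sub>C y) = a *\<^sub>C A x + b *\<^sub>C A y)"

text \<open>Self-adjointness A = A*: A is symmetric on D and the domain of the adjoint
  (all y for which x \<mapsto> <y, A x> is represented by some z) is contained in D.\<close>
definition self_adjoint_op :: "'a::complex_inner set \<Rightarrow> ('a \<Rightarrow> 'a) \<Rightarrow> bool" where
  "self_adjoint_op D A \<longleftrightarrow> densely_defined_linear D A \<and>
     (\<forall>x\<in>D. \<forall>y\<in>D. cinner (A x) y = cinner x (A y)) \<and>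
     (\<forall>y z. (\<forall>x\<in>D. cinner y (A x) = cinner z x) \<longrightarrow> y \<in> D)"

text \<open>Spectrum of the operator T with domain Dom, acting in the (closed) subspace V:
  mu is in the resolvent set iff T - mu maps Dom bijectively onto V with bounded inverse.\<close>
definition op_spectrum :: "'a::complex_inner set \<Rightarrow> 'a set \<Rightarrow> ('a \<Rightarrow> 'a) \<Rightarrow> complex set" where
  "op_spectrum V Dom T = {\<mu>. \<not> ((\<forall>y\<in>V. \<exists>!x. x \<in> Dom \<and> T x - \<mu> *\<^sub>C x = y) \<and>
                                   (\<exists>C. \<forall>x\<in>Dom. norm x \<le> C * norm (T x - \<mu> *\<^sub>C x)))}"

text \<open>Distance from a point to a set of complex numbers (min |lambda - lambda(.)|).
  For the empty set we put 0, so that the bounds having it as denominator are +infinity.\<close>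
definition spec_dist :: "complex \<Rightarrow> complex set \<Rightarrow> real" where
  "spec_dist z S = (if S = {} then 0 else Inf ((\<lambda>\<mu>. cmod (z - \<mu>)) ` S))"

definition vangle :: "'a::complex_inner \<Rightarrow> 'a \<Rightarrow> real" where
  "vangle u uh = arccos (cmod (cinner uh u))"

end

theory Submission
  imports Defs "Jordan_Normal_Form.Determinant"
begin

lemma scaleC_zero_right [simp]: "a *\<^sub>C (0::'a::complex_vector) = 0"
proof -
  have "a *\<^sub>C (0::'a) + a *\<^sub>C 0 = a *\<^sub>C 0 + 0" using scaleC_add_right[of a "0::'a" 0] by simp
  then show ?thesis by simp
qed

lemma scaleC_zero_left [simp]: "0 *\<^sub>C (x::'a::complex_vector) = 0"
proof -
  have "0 *\<^sub>C x + 0 *\<^sub>C x = 0 *\<^sub>C x + 0" using scaleC_add_left[of 0 0 x] by simp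
  then show ?thesis by simp
qed

lemma scaleC_minus_left: "(- a) *\<^sub>C (x::'a::complex_vector) = - (a *\<^sub>C x)"
proof -
  have "a *\<^sub>C x + (- a) *\<^sub>C x = 0" using scaleC_add_left[of a "-a" x] by simp
  then show ?thesis by (simp add: eq_neg_iff_add_eq_0 add.commute)
qed

lemma scaleC_minus_right: "a *\<^sub>C (- x) = - (a *\<^sub>C (x::'a::complex_vector))"
proof -
  have "a *\<^sub>C x + a *\<^sub>C (- x) = 0" using scaleC_add_right[of a x "-x"] by simp
  then show ?thesis by (simp add: eq_neg_iff_add_eq_0 add.commute)
qed

lemma scaleC_diff_right: "a *\<^sub>C (x - y) = a *\<^sub>C x - a *\<^sub>C (y::'a::complex_vector)"
  using scaleC_add_right[of a x "-y"] by (simp add: scaleC_minus_right)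

lemma scaleC_diff_left: "(a - b) *\<^sub>C x = a *\<^sub>C x - b *\<^sub>C (x::'a::complex_vector)"
  using scaleC_add_left[of a "-b" x] by (simp add: scaleC_minus_left)

lemma scaleC_sum_right: "a *\<^sub>C (\<Sum>i\<in>I. f i) = (\<Sum>i\<in>I. a *\<^sub>C (f i::'a::complex_vector))"
  by (induct I rule: infinite_finite_induct) (auto simp: scaleC_add_right)

lemma scaleC_sum_left: "(\<Sum>i\<in>I. c i) *\<^sub>C x = (\<Sum>i\<in>I. c i *\<^sub>C (x::'a::complex_vector))"
  by (induct I rule: infinite_finite_induct) (auto simp: scaleC_add_left)

lemma scaleC_one' [simp]: "1 *\<^sub>C (x::'a::complex_vector) = x" by (rule scaleC_one)

lemma scaleC_scaleC' [simp]: "a *\<^sub>C (b *\<^sub>C (x::'a::complex_vector)) = (a * b) *\<^sub>C x" by (rule scaleC_scaleC)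

lemma cinner_add_left: "cinner (x + y) z = cinner x z + cinner y (z::'a::complex_inner)"
  by (metis cinner_add_right cinner_commute complex_cnj_add)

lemma cinner_scaleC_left: "cinner (a *\<^sub>C x) y = cnj a * cinner x (y::'a::complex_inner)"
  by (metis cinner_scaleC_right cinner_commute complex_cnj_mult)

lemma cinner_zero_right [simp]: "cinner x (0::'a::complex_inner) = 0"
  using cinner_scaleC_right[of x 0 0] by simp

lemma cinner_zero_left [simp]: "cinner (0::'a::complex_inner) x = 0"
  using cinner_scaleC_left[of 0 0 x] by simp

lemma cinner_minus_right: "cinner x (- y) = - cinner x (y::'a::complex_inner)"
  using cinner_scaleC_right[of x "-1" y] by (simp add: scaleC_minus_left)

lemma cinner_minus_left: "cinner (- x) y = - cinner x (y::'a::complex_inner)"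
  using cinner_scaleC_left[of "-1" x y] by (simp add: scaleC_minus_left)

lemma cinner_diff_right: "cinner x (y - z) = cinner x y - cinner x (z::'a::complex_inner)"
  using cinner_add_right[of x y "-z"] by (simp add: cinner_minus_right)

lemma cinner_diff_left: "cinner (x - y) z = cinner x z - cinner y (z::'a::complex_inner)"
  using cinner_add_left[of x "-y" z] by (simp add: cinner_minus_left)

lemma cinner_sum_right: "cinner x (\<Sum>i\<in>I. f i) = (\<Sum>i\<in>I. cinner x (f i::'a::complex_inner))"
  by (induct I rule: infinite_finite_induct) (auto simp: cinner_add_right)

lemma cinner_sum_left: "cinner (\<Sum>i\<in>I. f i) x = (\<Sum>i\<in>I. cinner (f i::'a::complex_inner) x)"
  by (induct I rule: infinite_finite_induct) (auto simp: cinner_add_left)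

lemmas cinner_simps = cinner_add_left cinner_add_right cinner_scaleC_left cinner_scaleC_right
  cinner_diff_left cinner_diff_right cinner_minus_left cinner_minus_right cinner_sum_left cinner_sum_right

lemma cinner_self: "cinner x x = complex_of_real ((norm (x::'a::complex_inner))\<^sup>2)"
proof -
  have "Im (cinner x x) = 0" using cinner_commute[of x x]
    by (metis complex_cnj_cancel_iff complex_cnj_zero_iff complex_eq_iff complex_is_Real_iff Reals_cnj_iff)
  moreover have "Re (cinner x x) = (norm x)\<^sup>2" using norm_eq_sqrt_cinner[of x] cinner_ge_zero[of x] by simp
  ultimately show ?thesis by (simp add: complex_eq_iff)
qed

lemma norm_sq_cinner: "(norm (x::'a::complex_inner))\<^sup>2 = Re (cinner x x)"
  by (simp add: cinner_self)

lemma norm_scaleC: "norm (a *\<^sub>C (x::'a::complex_inner)) = cmod a * norm x"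
proof -
  have ca: "cnj a * a = complex_of_real ((cmod a)\<^sup>2)" using complex_norm_square[of a] by (simp add: mult.commute)
  have e: "cinner (a *\<^sub>C x) (a *\<^sub>C x) = cnj a * a * cinner x x"
    by (simp add: cinner_scaleC_left cinner_scaleC_right mult.assoc)
  have "(norm (a *\<^sub>C x))\<^sup>2 = Re (cnj a * a * cinner x x)"
    unfolding norm_sq_cinner e by (rule refl)
  also have "\<dots> = (cmod a)\<^sup>2 * (norm x)\<^sup>2"
    unfolding ca cinner_self by simp
  also have "\<dots> = (cmod a * norm x)\<^sup>2" by (simp add: power_mult_distrib)
  finally show ?thesis by (simp add: power2_eq_iff_nonneg)
qed

lemma norm_add_sq: "(norm (x + y))\<^sup>2 = (norm x)\<^sup>2 + (norm y)\<^sup>2 + 2 * Re (cinner x (y::'a::complex_inner))"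
proof -
  have "Re (cinner y x) = Re (cinner x y)" using cinner_commute[of y x] by simp 
  then show ?thesis by (simp add: norm_sq_cinner cinner_add_left cinner_add_right)
qed

lemma pythag: "cinner x y = 0 \<Longrightarrow> (norm (x + y))\<^sup>2 = (norm x)\<^sup>2 + (norm (y::'a::complex_inner))\<^sup>2"
  by (simp add: norm_add_sq)

lemma cauchy_schwarz: "cmod (cinner x y) \<le> norm x * norm (y::'a::complex_inner)"
proof (cases "x = 0")
  case True then show ?thesis by simp
next
  case False
  then have nx: "norm x > 0" by simp
  define c where "c = cinner x y / complex_of_real ((norm x)\<^sup>2)"
  define z where "z = y - c *\<^sub>C x"
  have xz: "cinner x z = 0" using nx
    by (simp add: z_def c_def cinner_diff_right cinner_scaleC_right cinner_self)
  have zx: "cinner z (c *\<^sub>C x) = 0" using xz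
    by (metis cinner_commute cinner_scaleC_right complex_cnj_zero mult_zero_right)
  have "y = z + c *\<^sub>C x" by (simp add: z_def)
  then have "(norm y)\<^sup>2 = (norm z)\<^sup>2 + (cmod c * norm x)\<^sup>2"
    using pythag[OF zx] by (simp add: norm_scaleC)
  then have "(cmod c * norm x)\<^sup>2 \<le> (norm y)\<^sup>2" by simp
  then have "cmod c * norm x \<le> norm y" by (simp add: power2_le_iff_abs_le)
  moreover have "cmod c = cmod (cinner x y) / (norm x)\<^sup>2" unfolding c_def norm_divide
    by (simp only: norm_of_real abs_power2)
  then have "cmod c * norm x = cmod (cinner x y) / norm x" using nx
    by (simp add: power2_eq_square)
  ultimately have "cmod (cinner x y) / norm x \<le> norm y" by linarith
  then show ?thesis using nx by (simp add: divide_le_eq mult.commute)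
qed

lemma norm_diff_sq: "(norm (x - y))\<^sup>2 = (norm x)\<^sup>2 + (norm y)\<^sup>2 - 2 * Re (cinner x (y::'a::complex_inner))"
  using norm_add_sq[of x "-y"] by (simp add: cinner_minus_right)

lemma csub_add: "csubspace V \<Longrightarrow> x \<in> V \<Longrightarrow> y \<in> V \<Longrightarrow> x + y \<in> V"
  unfolding csubspace_def by blast
lemma csub_scale: "csubspace V \<Longrightarrow> x \<in> V \<Longrightarrow> a *\<^sub>C x \<in> V"
  unfolding csubspace_def by blast
lemma csub_zero: "csubspace V \<Longrightarrow> 0 \<in> V"
  unfolding csubspace_def by blast
lemma csub_diff: "csubspace V \<Longrightarrow> x \<in> V \<Longrightarrow> y \<in> V \<Longrightarrow> x - y \<in> V"
  using csub_add[of V x "(-1) *\<^sub>C y"] csub_scale[of V y "-1"] by (simp add: scaleC_minus_left)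
lemma csub_sum: "csubspace V \<Longrightarrow> (\<And>i. i \<in> I \<Longrightarrow> f i \<in> V) \<Longrightarrow> (\<Sum>i\<in>I. f i) \<in> V"
  by (induct I rule: infinite_finite_induct) (auto simp: csub_zero csub_add)


lemma unitary_rows:
  fixes \<Omega> :: "nat \<Rightarrow> nat \<Rightarrow> complex"
  assumes H: "\<forall>i\<in>{1..k}. \<forall>j\<in>{1..k}. (\<Sum>l=1..k. cnj (\<Omega> l i) * \<Omega> l j) = (if i = j then 1 else 0)"
    and a: "a \<in> {1..k}" and b: "b \<in> {1..k}"
  shows "(\<Sum>j=1..k. \<Omega> a j * cnj (\<Omega> b j)) = (if a = b then 1 else 0)"
proof -
  define M where "M = mat k k (\<lambda>(i,j). \<Omega> (Suc i) (Suc j))"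
  define Mh where "Mh = mat k k (\<lambda>(i,j). cnj (\<Omega> (Suc j) (Suc i)))"
  have sh: "\<And>g::nat\<Rightarrow>complex. (\<Sum>l=1..k. g l) = (\<Sum>l<k. g (Suc l))"
    by (induct k) (auto simp: lessThan_Suc)
  have sh': "\<And>g::nat\<Rightarrow>complex. (\<Sum>l<k. g (Suc l)) = (\<Sum>l=1..k. g l)" using sh by simp
  have M: "M \<in> carrier_mat k k" "Mh \<in> carrier_mat k k" unfolding M_def Mh_def by auto
  have "Mh * M = 1\<^sub>m k"
  proof (rule eq_matI)
    fix i j assume ij: "i < dim_row (1\<^sub>m k)" "j < dim_col (1\<^sub>m k)"
    then have "(Mh * M) $$ (i,j) = (\<Sum>l<k. cnj (\<Omega> (Suc l) (Suc i)) * \<Omega> (Suc l) (Suc j))"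
      unfolding M_def Mh_def by (auto simp: scalar_prod_def times_mat_def atLeast0LessThan)
    also have "\<dots> = (\<Sum>l=1..k. cnj (\<Omega> l (Suc i)) * \<Omega> l (Suc j))" by (rule sh')
    also have "\<dots> = (if i = j then 1 else 0)" using H[rule_format, of "Suc i" "Suc j"] ij by simp
    finally show "(Mh * M) $$ (i,j) = 1\<^sub>m k $$ (i,j)" using ij by auto
  qed (auto simp: M_def Mh_def)
  then have E: "M * Mh = 1\<^sub>m k" using mat_mult_left_right_inverse[OF M(2) M(1)] by blast
  obtain a' b' where ab: "a = Suc a'" "b = Suc b'" "a' < k" "b' < k" using a b
    by (intro that[of "a - 1" "b - 1"]) auto
  have "(M * Mh) $$ (a',b') = (\<Sum>l<k. \<Omega> a (Suc l) * cnj (\<Omega> b (Suc l)))"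
    unfolding M_def Mh_def using ab by (auto simp: scalar_prod_def times_mat_def atLeast0LessThan)
  also have "\<dots> = (\<Sum>j=1..k. \<Omega> a j * cnj (\<Omega> b j))" by (rule sh')
  finally show ?thesis using E ab by auto
qed


lemma spec_bound:
  fixes V Dom :: "'a::complex_inner set" and T :: "'a \<Rightarrow> 'a" and lam :: complex
  assumes DV: "Dom \<subseteq> V"
    and TV: "\<forall>x\<in>Dom. T x \<in> V"
    and Vsub: "csubspace V" and Dsub: "csubspace Dom"
    and Tlin: "\<forall>x\<in>Dom. \<forall>y\<in>Dom. \<forall>a b. T (a *\<^sub>C x + b *\<^sub>C y) = a *\<^sub>C T x + b *\<^sub>C T y"
    and Tsym: "\<forall>x\<in>Dom. \<forall>y\<in>Dom. cinner (T x) y = cinner x (T y)"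
    and lamr: "Im lam = 0"
    and pos: "spec_dist lam (op_spectrum V Dom T) > 0"
    and x: "x \<in> Dom"
  shows "spec_dist lam (op_spectrum V Dom T) * norm x \<le> norm (T x - lam *\<^sub>C x)"
proof (rule ccontr)
  assume contra: "\<not> ?thesis"
  define sig where "sig = op_spectrum V Dom T"
  define d where "d = spec_dist lam sig"
  have dpos: "d > 0" using pos by (simp add: d_def sig_def)
  have ne: "sig \<noteq> {}" using dpos by (auto simp: d_def spec_dist_def)
  have dle: "d \<le> cmod (lam - \<mu>)" if "\<mu> \<in> sig" for \<mu>
  proof -
    have "bdd_below ((\<lambda>\<mu>. cmod (lam - \<mu>)) ` sig)" by (rule bdd_belowI[of _ 0]) auto
    then show ?thesis unfolding d_def spec_dist_def using ne that by (auto intro: cInf_lower)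
  qed
  have "lam \<notin> sig" using dle[of lam] dpos by auto
  then have hyp1: "\<forall>y\<in>V. \<exists>!z. z \<in> Dom \<and> T z - lam *\<^sub>C z = y"
    and hyp2: "\<exists>C. \<forall>z\<in>Dom. norm z \<le> C * norm (T z - lam *\<^sub>C z)"
    unfolding sig_def op_spectrum_def by auto
  then obtain C where C: "\<And>z. z \<in> Dom \<Longrightarrow> norm z \<le> C * norm (T z - lam *\<^sub>C z)" by blast
  define L where "L z = T z - lam *\<^sub>C z" for z
  have LV: "L z \<in> V" if "z \<in> Dom" for z
    using that DV TV Vsub by (auto simp: L_def intro!: csub_diff csub_scale)
  have Llin: "L (a *\<^sub>C z + b *\<^sub>C w) = a *\<^sub>C L z + b *\<^sub>C L w" if "z \<in> Dom" "w \<in> Dom" for a b z w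
    using Tlin that unfolding L_def
    by (simp add: scaleC_add_right scaleC_diff_right algebra_simps)
  define S where "S y = (THE z. z \<in> Dom \<and> L z = y)" for y
  have S1: "S y \<in> Dom \<and> L (S y) = y" if "y \<in> V" for y
    using theI'[OF hyp1[rule_format, OF that]] unfolding S_def L_def .
  have S2: "S (L z) = z" if "z \<in> Dom" for z
    unfolding S_def by (rule the1_equality) (use hyp1 LV that L_def in auto)
  have Slin: "S (a *\<^sub>C y + b *\<^sub>C y') = a *\<^sub>C S y + b *\<^sub>C S y'" if "y \<in> V" "y' \<in> V" for a b y y'
  proof -
    have z: "a *\<^sub>C S y + b *\<^sub>C S y' \<in> Dom" using S1 that Dsub by (auto intro!: csub_add csub_scale)
    have "L (a *\<^sub>C S y + b *\<^sub>C S y') = a *\<^sub>C y + b *\<^sub>C y'" using Llin S1 that by simp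
    then show ?thesis using S2[OF z] by simp
  qed
  have Sadd: "S (y + y') = S y + S y'" if "y \<in> V" "y' \<in> V" for y y'
    using Slin[OF that, of 1 1] by simp
  have Sscale: "S (a *\<^sub>C y) = a *\<^sub>C S y" if "y \<in> V" for a y
    using Slin[OF that that, of a 0] by simp
  have S0: "S 0 = 0" using Sscale[of 0 0] Vsub csub_zero by auto
  have SV: "S y \<in> V" if "y \<in> V" for y using S1 that DV by auto
  have Ssym: "cinner (S y) y' = cinner y (S y')" if "y \<in> V" "y' \<in> V" for y y'
  proof -
    have "cinner (S y) y' = cinner (S y) (T (S y')) - lam * cinner (S y) (S y')"
      using S1[OF that(2)] by (metis L_def cinner_diff_right cinner_scaleC_right)
    moreover have "cinner y (S y') = cinner (T (S y)) (S y') - cnj lam * cinner (S y) (S y')"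
      using S1[OF that(1)] by (metis L_def cinner_diff_left cinner_scaleC_left)
    moreover have "cnj lam = lam" using lamr by (simp add: complex_eq_iff)
    ultimately show ?thesis using Tsym S1 that by simp
  qed
  have xne: "x \<noteq> 0" using contra by auto
  define U where "U = {y \<in> V. norm y = 1}"
  define M2 where "M2 = Sup ((\<lambda>y. (norm (S y))\<^sup>2) ` U)"
  have Sb: "norm (S y) \<le> C * norm y" if "y \<in> V" for y using C[of "S y"] S1[OF that] by (simp add: L_def)
  define x1 where "x1 = complex_of_real (1 / norm x) *\<^sub>C x"
  have x1U: "x1 \<in> U" using xne x DV Vsub by (auto simp: U_def x1_def norm_scaleC norm_divide intro!: csub_scale)
  then have Une: "U \<noteq> {}" by auto
  have C0: "C \<ge> 0" using Sb[of x1] x1U by (auto simp: U_def) (smt (verit) norm_ge_zero)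
  have bdd: "bdd_above ((\<lambda>y. (norm (S y))\<^sup>2) ` U)"
  proof (rule bdd_aboveI[of _ "C\<^sup>2"])
    fix t assume "t \<in> (\<lambda>y. (norm (S y))\<^sup>2) ` U"
    then obtain y where y: "y \<in> U" "t = (norm (S y))\<^sup>2" by auto
    then have "norm (S y) \<le> C" using Sb[of y] by (auto simp: U_def)
    then show "t \<le> C\<^sup>2" using y by (simp add: power_mono)
  qed
  have M2b: "(norm (S y))\<^sup>2 \<le> M2 * (norm y)\<^sup>2" if "y \<in> V" for y
  proof (cases "y = 0")
    case True then show ?thesis using S0 by simp
  next
    case False
    define y1 where "y1 = complex_of_real (1 / norm y) *\<^sub>C y"
    have "y1 \<in> U" using False that Vsub by (auto simp: U_def y1_def norm_scaleC norm_divide intro!: csub_scale)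
    then have "(norm (S y1))\<^sup>2 \<le> M2" unfolding M2_def using bdd by (auto intro: cSUP_upper)
    moreover have "norm (S y1) = norm (S y) / norm y" using that
      by (simp add: y1_def Sscale norm_scaleC norm_divide)
    ultimately have "(norm (S y) / norm y)\<^sup>2 \<le> M2" by simp
    then show ?thesis using False by (simp add: power_divide divide_le_eq)
  qed
  have M2nn: "M2 \<ge> 0" using M2b[of x1] x1U by (auto simp: U_def) (smt (verit) zero_le_power2)
  define m where "m = sqrt M2"
  have mM: "m * m = M2" "m\<^sup>2 = M2" "m \<ge> 0" using M2nn by (auto simp: m_def)
  have Smb: "norm (S y) \<le> m * norm y" if "y \<in> V" for y
  proof -
    have "(norm (S y))\<^sup>2 \<le> (m * norm y)\<^sup>2" using M2b[OF that] mM by (simp add: power_mult_distrib)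
    then show ?thesis using mM by (simp add: power2_le_iff_abs_le)
  qed
  have nx: "norm x \<le> m * norm (L x)" using Smb[OF LV[OF x]] S2[OF x] by simp
  have lt: "norm (L x) < d * norm x" using contra by (simp add: L_def d_def sig_def)
  have mpos: "m > 0" using nx xne mM(3) by (cases "m = 0") auto
  have "m * norm (L x) < m * (d * norm x)" using lt mpos by (rule mult_strict_left_mono)
  then have "norm x < (m * d) * norm x" using nx by (simp add: mult.assoc)
  then have md: "1 < m * d" using xne by (simp add: mult_less_cancel_right1)
  have M2pos: "M2 > 0" using mpos mM by auto
  have key: "(norm (S (S y) - complex_of_real M2 *\<^sub>C y))\<^sup>2 \<le> M2 * (M2 - (norm (S y))\<^sup>2)"
    if y: "y \<in> U" for y
  proof -
    have yV: "y \<in> V" and y1: "norm y = 1" using y by (auto simp: U_def)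
    have a: "(norm (S (S y)))\<^sup>2 \<le> M2 * (norm (S y))\<^sup>2" using M2b[OF SV[OF yV]] .
    have b: "(norm (complex_of_real M2 *\<^sub>C y))\<^sup>2 = M2 * M2" using y1 M2nn
      by (simp add: norm_scaleC power2_eq_square)
    have c: "cinner (S (S y)) (complex_of_real M2 *\<^sub>C y) = complex_of_real M2 * complex_of_real ((norm (S y))\<^sup>2)"
      using Ssym[OF SV[OF yV] yV] by (simp add: cinner_scaleC_right cinner_self)
    have "Re (cinner (S (S y)) (complex_of_real M2 *\<^sub>C y)) = M2 * (norm (S y))\<^sup>2"
      unfolding c by simp
    then show ?thesis unfolding norm_diff_sq using a b by (simp add: algebra_simps)
  qed
  have approx: "\<exists>y\<in>U. (norm (S y))\<^sup>2 > M2 - \<eta>" if "\<eta> > 0" for \<eta>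
  proof -
    have "M2 - \<eta> < M2" using that by simp
    then show ?thesis unfolding M2_def using less_cSup_iff[OF _ bdd, of "M2 - \<eta>"] Une
      by (simp add: M2_def)
  qed
  define AP where "AP s = (\<forall>\<delta>>0. \<exists>y\<in>U. norm (S y - complex_of_real (s * m) *\<^sub>C y) \<le> \<delta>)" for s
  have APor: "AP 1 \<or> AP (-1)"
  proof (rule ccontr)
    assume "\<not> (AP 1 \<or> AP (-1))"
    then obtain \<delta>1 \<delta>2 where d1: "\<delta>1 > 0" "\<And>y. y \<in> U \<Longrightarrow> norm (S y - complex_of_real m *\<^sub>C y) > \<delta>1"
      and d2: "\<delta>2 > 0" "\<And>y. y \<in> U \<Longrightarrow> norm (S y - complex_of_real (- m) *\<^sub>C y) > \<delta>2"
      unfolding AP_def by (auto simp: not_le)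
    define \<delta> where "\<delta> = min \<delta>1 \<delta>2"
    have dp: "\<delta> > 0" using d1 d2 by (simp add: \<delta>_def)
    obtain y where y: "y \<in> U" and yb: "(norm (S y))\<^sup>2 > M2 - \<delta>^4 / M2"
      using approx[of "\<delta>^4 / M2"] dp M2pos by auto
    have yV: "y \<in> V" and y1: "norm y = 1" using y by (auto simp: U_def)
    have "(norm (S (S y) - complex_of_real M2 *\<^sub>C y))\<^sup>2 < (\<delta>\<^sup>2)\<^sup>2"
    proof -
      have "M2 * (M2 - (norm (S y))\<^sup>2) < M2 * (\<delta>^4 / M2)"
        using yb M2pos by (intro mult_strict_left_mono) auto
      also have "\<dots> = (\<delta>\<^sup>2)\<^sup>2" using M2pos by simp
      finally show ?thesis using key[OF y] by linarith
    qed
    then have E: "norm (S (S y) - complex_of_real M2 *\<^sub>C y) < \<delta>\<^sup>2"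
      by (rule power_less_imp_less_base[of _ 2]) (use dp in auto)
    define w where "w = S y + complex_of_real m *\<^sub>C y"
    have wV: "w \<in> V" using yV SV Vsub by (auto simp: w_def intro!: csub_add csub_scale)
    have Sw: "S w - complex_of_real m *\<^sub>C w = S (S y) - complex_of_real M2 *\<^sub>C y"
    proof -
      have "S w = S (S y) + complex_of_real m *\<^sub>C S y"
        unfolding w_def using Sadd[OF SV[OF yV] csub_scale[OF Vsub yV]] Sscale[OF yV] by simp
      moreover have "complex_of_real m *\<^sub>C w = complex_of_real m *\<^sub>C S y + complex_of_real M2 *\<^sub>C y"
        unfolding w_def using mM by (simp add: scaleC_add_right flip: of_real_mult)
      ultimately show ?thesis by simp
    qed
    show False
    proof (cases "norm w \<le> \<delta>")
      case True
      have "S y - complex_of_real (- m) *\<^sub>C y = w" by (simp add: w_def scaleC_minus_left)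
      then show False using d2(2)[OF y] True by (simp add: \<delta>_def)
    next
      case False
      then have wpos: "norm w > \<delta>" by simp
      define w1 where "w1 = complex_of_real (1 / norm w) *\<^sub>C w"
      have w1U: "w1 \<in> U" using wpos dp wV Vsub by (auto simp: U_def w1_def norm_scaleC norm_divide intro!: csub_scale)
      have "S w1 - complex_of_real m *\<^sub>C w1 = complex_of_real (1 / norm w) *\<^sub>C (S w - complex_of_real m *\<^sub>C w)"
        by (simp add: w1_def Sscale[OF wV] scaleC_diff_right mult.commute)
      then have "norm (S w1 - complex_of_real m *\<^sub>C w1) = norm (S (S y) - complex_of_real M2 *\<^sub>C y) / norm w"
        using Sw by (simp add: norm_scaleC norm_divide)
      also have "\<dots> < \<delta>\<^sup>2 / \<delta>" using E wpos dp by (intro frac_less) auto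
      also have "\<dots> = \<delta>" by (simp add: power2_eq_square)
      finally show False using d1(2)[OF w1U] by (simp add: \<delta>_def)
    qed
  qed
  then obtain s where s: "s = 1 \<or> s = -1" "AP s" by blast
  define \<mu> where "\<mu> = lam + complex_of_real (s / m)"
  have "\<mu> \<in> sig"
  proof -
    have "\<not> (\<exists>C'. \<forall>z\<in>Dom. norm z \<le> C' * norm (T z - \<mu> *\<^sub>C z))"
    proof
      assume "\<exists>C'. \<forall>z\<in>Dom. norm z \<le> C' * norm (T z - \<mu> *\<^sub>C z)"
      then obtain C' where C': "\<And>z. z \<in> Dom \<Longrightarrow> norm z \<le> C' * norm (T z - \<mu> *\<^sub>C z)" by blast
      define \<delta> where "\<delta> = min (m / 2) (m * m / (2 * (\<bar>C'\<bar> + 1)))"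
      have dp: "\<delta> > 0" using mpos by (simp add: \<delta>_def)
      obtain y where y: "y \<in> U" and yd: "norm (S y - complex_of_real (s * m) *\<^sub>C y) \<le> \<delta>"
        using s(2) dp unfolding AP_def by blast
      have yV: "y \<in> V" and y1: "norm y = 1" using y by (auto simp: U_def)
      define z where "z = S y"
      have zD: "z \<in> Dom" using S1[OF yV] by (simp add: z_def)
      have ss: "s * s = 1" using s(1) by auto
      have Tz: "T z - \<mu> *\<^sub>C z = - (complex_of_real (s / m) *\<^sub>C (S y - complex_of_real (s * m) *\<^sub>C y))"
      proof -
        have "T z - \<mu> *\<^sub>C z = L z - complex_of_real (s / m) *\<^sub>C z"
          by (simp add: L_def \<mu>_def scaleC_add_left)
        also have "L z = y" using S1[OF yV] by (simp add: z_def)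
        also have "complex_of_real (s / m) *\<^sub>C (complex_of_real (s * m) *\<^sub>C y) = y"
        proof -
          have e: "s / m * (s * m) = 1" using mpos ss by (simp add: field_simps)
          have "complex_of_real (s / m) * complex_of_real (s * m) = 1"
            using arg_cong[OF e, of complex_of_real] by (simp only: of_real_mult of_real_1)
          then show ?thesis by (simp only: scaleC_scaleC scaleC_one)
        qed
        ultimately show ?thesis by (simp add: z_def scaleC_diff_right)
      qed
      have nTz: "norm (T z - \<mu> *\<^sub>C z) \<le> \<delta> / m"
      proof -
        have "norm (T z - \<mu> *\<^sub>C z) = norm (S y - complex_of_real (s * m) *\<^sub>C y) / m"
          unfolding Tz using s(1) mpos by (auto simp: norm_scaleC norm_divide)
        then show ?thesis using yd mpos by (simp add: divide_right_mono)
      qed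
      have nz: "norm z \<ge> m - \<delta>"
      proof -
        have "norm (complex_of_real (s * m) *\<^sub>C y) = m" using s(1) mpos y1 by (auto simp: norm_scaleC)
        moreover have "norm (complex_of_real (s * m) *\<^sub>C y) - norm (S y) \<le> norm (S y - complex_of_real (s * m) *\<^sub>C y)"
          by (metis norm_minus_commute norm_triangle_ineq2)
        ultimately show ?thesis using yd by (simp add: z_def)
      qed
      have "m / 2 \<le> norm z" using nz by (simp add: \<delta>_def)
      also have "norm z \<le> C' * norm (T z - \<mu> *\<^sub>C z)" using C'[OF zD] .
      also have "\<dots> \<le> \<bar>C'\<bar> * (\<delta> / m)" using nTz
        by (meson abs_ge_self abs_ge_zero dual_order.trans mult_left_mono mult_right_mono norm_ge_zero)
      also have "\<dots> \<le> \<bar>C'\<bar> * (m / (2 * (\<bar>C'\<bar> + 1)))"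
      proof -
        have "\<delta> / m \<le> (m * m / (2 * (\<bar>C'\<bar> + 1))) / m" using mpos by (intro divide_right_mono) (auto simp: \<delta>_def)
        also have "\<dots> = m / (2 * (\<bar>C'\<bar> + 1))" using mpos by simp
        finally show ?thesis by (intro mult_left_mono) auto
      qed
      also have "\<dots> < m / 2"
      proof -
        have "\<bar>C'\<bar> * (m / (2 * (\<bar>C'\<bar> + 1))) = (m / 2) * (\<bar>C'\<bar> / (\<bar>C'\<bar> + 1))" by (simp add: field_simps)
        also have "\<dots> < (m / 2) * 1" using mpos by (intro mult_strict_left_mono) auto
        finally show ?thesis by simp
      qed
      finally show False by simp
    qed
    then show ?thesis unfolding sig_def op_spectrum_def by blast
  qed
  then have "d \<le> cmod (lam - \<mu>)" by (rule dle)
  also have "cmod (lam - \<mu>) = 1 / m" using s(1) mpos by (auto simp: \<mu>_def norm_divide)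
  finally show False using md mpos by (simp add: field_simps)
qed


definition orthonormal_on :: "'b set \<Rightarrow> ('b \<Rightarrow> 'a::complex_inner) \<Rightarrow> bool" where
  "orthonormal_on I f \<longleftrightarrow> (\<forall>i\<in>I. \<forall>j\<in>I. cinner (f i) (f j) = (if i = j then 1 else 0))"

lemma ON_delta:
  assumes "orthonormal_on I f" "finite I" "j \<in> I"
  shows "(\<Sum>i\<in>I. cinner (f i) (f j) *\<^sub>C f i) = f j"
proof -
  have "(\<Sum>i\<in>I. cinner (f i) (f j) *\<^sub>C f i) = (\<Sum>i\<in>I. if i = j then f i else 0)"
    using assms(1,3) by (intro sum.cong) (auto simp: orthonormal_on_def)
  also have "\<dots> = f j" using assms(2,3) by simp
  finally show ?thesis .
qed

lemma ON_delta2: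
  assumes "orthonormal_on I f" "finite I" "j \<in> I"
  shows "(\<Sum>i\<in>I. c i * cinner (f j) (f i)) = c j"
proof -
  have "(\<Sum>i\<in>I. c i * cinner (f j) (f i)) = (\<Sum>i\<in>I. if j = i then c i else 0)"
    using assms(1,3) by (intro sum.cong) (auto simp: orthonormal_on_def)
  also have "\<dots> = c j" using assms(2,3) by simp
  finally show ?thesis .
qed

lemma ON_inj: "orthonormal_on I f \<Longrightarrow> inj_on f I"
  unfolding orthonormal_on_def inj_on_def by (metis one_neq_zero)

lemma span_repr:
  assumes ON: "orthonormal_on I f" and fin: "finite I" and s: "s \<in> cspan (f ` I)"
  shows "s = (\<Sum>i\<in>I. cinner (f i) s *\<^sub>C f i)"
proof -
  obtain F c where F: "finite F" "F \<subseteq> f ` I" and sF: "s = (\<Sum>v\<in>F. c v *\<^sub>C v)"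
    using s unfolding cspan_def by blast
  have "(\<Sum>i\<in>I. cinner (f i) s *\<^sub>C f i) = (\<Sum>i\<in>I. \<Sum>v\<in>F. (c v * cinner (f i) v) *\<^sub>C f i)"
    unfolding sF by (simp add: cinner_sum_right cinner_scaleC_right scaleC_sum_left)
  also have "\<dots> = (\<Sum>v\<in>F. \<Sum>i\<in>I. (c v * cinner (f i) v) *\<^sub>C f i)" by (rule sum.swap)
  also have "\<dots> = (\<Sum>v\<in>F. c v *\<^sub>C v)"
  proof (rule sum.cong[OF refl])
    fix v assume "v \<in> F"
    then obtain j where j: "j \<in> I" "v = f j" using F by auto
    have "(\<Sum>i\<in>I. (c v * cinner (f i) v) *\<^sub>C f i) = c v *\<^sub>C (\<Sum>i\<in>I. cinner (f i) (f j) *\<^sub>C f i)"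
      by (simp add: scaleC_sum_right j)
    also have "\<dots> = c v *\<^sub>C v" using ON_delta[OF ON fin j(1)] j by simp
    finally show "(\<Sum>i\<in>I. (c v * cinner (f i) v) *\<^sub>C f i) = c v *\<^sub>C v" .
  qed
  finally show ?thesis using sF by simp
qed

lemma in_span_sum:
  assumes ON: "orthonormal_on I f" and fin: "finite I"
  shows "(\<Sum>i\<in>I. c i *\<^sub>C f i) \<in> cspan (f ` I)"
proof -
  have inj: "inj_on f I" by (rule ON_inj[OF ON])
  have e: "(\<Sum>v\<in>f ` I. c (the_inv_into I f v) *\<^sub>C v) = (\<Sum>i\<in>I. c i *\<^sub>C f i)"
    unfolding sum.reindex[OF inj] comp_def by (rule sum.cong[OF refl]) (simp add: the_inv_into_f_f[OF inj])
  show ?thesis unfolding cspan_def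
    by (rule CollectI, rule exI[of _ "f ` I"], rule exI[of _ "\<lambda>v. c (the_inv_into I f v)"])
      (simp add: fin e)
qed

lemma in_span_gen:
  assumes "j \<in> I" shows "f j \<in> cspan (f ` I)"
proof -
  show ?thesis unfolding cspan_def
    by (rule CollectI, rule exI[of _ "{f j}"], rule exI[of _ "\<lambda>v. 1"]) (simp add: assms)
qed

lemma orth_proj_span:
  assumes ON: "orthonormal_on I f" and fin: "finite I"
  shows "orth_proj (cspan (f ` I)) x = (\<Sum>i\<in>I. cinner (f i) x *\<^sub>C f i)"
  unfolding orth_proj_def
proof (rule the_equality)
  let ?p = "\<Sum>i\<in>I. cinner (f i) x *\<^sub>C f i"
  have orth: "cinner (f j) (x - ?p) = 0" if "j \<in> I" for j
    using ON_delta2[OF ON fin that, of "\<lambda>i. cinner (f i) x"]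
    by (simp add: cinner_diff_right cinner_sum_right cinner_scaleC_right)
  show "?p \<in> cspan (f ` I) \<and> (\<forall>s\<in>cspan (f ` I). cinner s (x - ?p) = 0)"
  proof safe
    show "?p \<in> cspan (f ` I)" by (rule in_span_sum[OF ON fin])
    fix s assume s: "s \<in> cspan (f ` I)"
    have "cinner s (x - ?p) = (\<Sum>i\<in>I. cnj (cinner (f i) s) * cinner (f i) (x - ?p))"
      by (subst span_repr[OF ON fin s]) (simp add: cinner_sum_left cinner_scaleC_left)
    also have "\<dots> = 0" using orth by simp
    finally show "cinner s (x - ?p) = 0" .
  qed
  fix p assume p: "p \<in> cspan (f ` I) \<and> (\<forall>s\<in>cspan (f ` I). cinner s (x - p) = 0)"
  have "cinner (f i) p = cinner (f i) x" if "i \<in> I" for i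
    using p in_span_gen[OF that, of f] by (simp add: cinner_diff_right)
  then show "p = ?p" using span_repr[OF ON fin, of p] p by (metis (no_types, lifting) sum.cong)
qed

lemma orth_compl_diff: "x \<in> orth_compl S \<Longrightarrow> y \<in> orth_compl S \<Longrightarrow> x - y \<in> orth_compl S"
  unfolding orth_compl_def by (auto simp: cinner_diff_right)

lemma orth_proj_compl_span:
  assumes ON: "orthonormal_on I f" and fin: "finite I"
  shows "orth_proj (orth_compl (cspan (f ` I))) x = x - (\<Sum>i\<in>I. cinner (f i) x *\<^sub>C f i)"
  unfolding orth_proj_def
proof (rule the_equality)
  let ?q = "\<Sum>i\<in>I. cinner (f i) x *\<^sub>C f i"
  let ?p = "x - ?q"
  have qspan: "?q \<in> cspan (f ` I)" by (rule in_span_sum[OF ON fin])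
  have orth: "cinner (f j) ?p = 0" if "j \<in> I" for j
    using ON_delta2[OF ON fin that, of "\<lambda>i. cinner (f i) x"]
    by (simp add: cinner_diff_right cinner_sum_right cinner_scaleC_right)
  have pin: "?p \<in> orth_compl (cspan (f ` I))"
    unfolding orth_compl_def
  proof safe
    fix y assume y: "y \<in> cspan (f ` I)"
    have "cinner y ?p = (\<Sum>i\<in>I. cnj (cinner (f i) y) * cinner (f i) ?p)"
      by (subst span_repr[OF ON fin y]) (simp add: cinner_sum_left cinner_scaleC_left)
    also have "\<dots> = 0" using orth by simp
    finally show "cinner y ?p = 0" .
  qed
  have perp: "cinner s y = 0" if "s \<in> orth_compl (cspan (f ` I))" "y \<in> cspan (f ` I)" for s y
  proof -
    have "cinner y s = 0" using that unfolding orth_compl_def by simp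
    then show ?thesis by (subst cinner_commute) simp
  qed
  show "?p \<in> orth_compl (cspan (f ` I)) \<and> (\<forall>s\<in>orth_compl (cspan (f ` I)). cinner s (x - ?p) = 0)"
    using pin perp qspan by simp
  fix p assume p: "p \<in> orth_compl (cspan (f ` I)) \<and> (\<forall>s\<in>orth_compl (cspan (f ` I)). cinner s (x - p) = 0)"
  define w where "w = ?p - p"
  have w: "w \<in> orth_compl (cspan (f ` I))" unfolding w_def using p by (intro orth_compl_diff[OF pin]) simp
  have "cinner w w = cinner w (x - p) - cinner w (x - ?p)" by (simp add: w_def cinner_diff_right)
  also have "\<dots> = 0" using p w perp[OF w qspan] by simp
  finally show "p = ?p" using cinner_eq_zero_iff[of w] by (simp add: w_def)
qed

lemma onorm_le:
  fixes f :: "'a::real_normed_vector \<Rightarrow> 'b::real_normed_vector"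
  assumes B: "\<And>x. norm (f x) \<le> B * norm x"
  shows "norm (f x) \<le> onorm f * norm x" and "onorm f \<ge> 0"
proof -
  have bdd: "bdd_above (range (\<lambda>x. norm (f x) / norm x))"
  proof (rule bdd_aboveI[of _ "max B 0"])
    fix t assume "t \<in> range (\<lambda>x. norm (f x) / norm x)"
    then obtain y where t: "t = norm (f y) / norm y" by auto
    show "t \<le> max B 0"
    proof (cases "y = 0")
      case True then show ?thesis using t by simp
    next
      case False
      have "norm (f y) / norm y \<le> B" using B[of y] False by (simp add: divide_le_eq)
      then show ?thesis using t by (simp add: le_max_iff_disj)
    qed
  qed
  have "0 \<le> norm (f 0) / norm (0::'a)" by simp
  also have "\<dots> \<le> onorm f" unfolding onorm_def by (rule cSUP_upper[OF UNIV_I bdd])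
  finally show "onorm f \<ge> 0" .
  show "norm (f x) \<le> onorm f * norm x"
  proof (cases "x = 0")
    case True then show ?thesis using B[of 0] by simp
  next
    case False
    have "norm (f x) / norm x \<le> onorm f" unfolding onorm_def by (rule cSUP_upper[OF UNIV_I bdd])
    then show ?thesis using False by (simp add: divide_le_eq)
  qed
qed

lemma sum_inner_bound:
  "norm (\<Sum>j\<in>J. cinner (f j) x *\<^sub>C (g j::'a::complex_inner)) \<le> (\<Sum>j\<in>J. norm (f j) * norm (g j)) * norm x"
proof -
  have "norm (\<Sum>j\<in>J. cinner (f j) x *\<^sub>C g j) \<le> (\<Sum>j\<in>J. norm (cinner (f j) x *\<^sub>C g j))" by (rule norm_sum)
  also have "\<dots> \<le> (\<Sum>j\<in>J. norm (f j) * norm (g j) * norm x)"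
  proof (rule sum_mono)
    fix j
    have "norm (cinner (f j) x *\<^sub>C g j) = cmod (cinner (f j) x) * norm (g j)" by (simp add: norm_scaleC)
    also have "\<dots> \<le> (norm (f j) * norm x) * norm (g j)" by (intro mult_right_mono cauchy_schwarz) auto
    finally show "norm (cinner (f j) x *\<^sub>C g j) \<le> norm (f j) * norm (g j) * norm x" by (simp add: algebra_simps)
  qed
  also have "\<dots> = (\<Sum>j\<in>J. norm (f j) * norm (g j)) * norm x" by (simp add: sum_distrib_right)
  finally show ?thesis .
qed


lemma lin_sum:
  fixes f :: "'a::complex_vector \<Rightarrow> 'b::complex_vector"
  assumes fin: "finite J" and dom: "\<And>j. j \<in> J \<Longrightarrow> y j \<in> D" and Dsub: "csubspace D"
    and lin: "\<And>x y a b. x \<in> D \<Longrightarrow> y \<in> D \<Longrightarrow> f (a *\<^sub>C x + b *\<^sub>C y) = a *\<^sub>C f x + b *\<^sub>C f y"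
  shows "f (\<Sum>j\<in>J. c j *\<^sub>C y j) = (\<Sum>j\<in>J. c j *\<^sub>C f (y j))"
  using fin dom
proof (induct J rule: finite_induct)
  case empty
  have "f 0 = f (0 *\<^sub>C 0 + 0 *\<^sub>C 0)" by simp
  also have "\<dots> = 0" using lin[of 0 0 0 0] csub_zero[OF Dsub] by simp
  finally show ?case by simp
next
  case (insert j J)
  have yj: "y j \<in> D" using insert by auto
  have s: "(\<Sum>j\<in>J. c j *\<^sub>C y j) \<in> D" using insert Dsub by (auto intro!: csub_sum csub_scale)
  have "f (\<Sum>j\<in>insert j J. c j *\<^sub>C y j) = f (c j *\<^sub>C y j + 1 *\<^sub>C (\<Sum>j\<in>J. c j *\<^sub>C y j))"
    using insert by simp
  also have "\<dots> = c j *\<^sub>C f (y j) + f (\<Sum>j\<in>J. c j *\<^sub>C y j)" using lin[OF yj s, of "c j" 1] by simp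
  finally show ?case using insert by simp
qed

lemma compl_mem:
  assumes ON: "orthonormal_on I f" and fin: "finite I"
  shows "x - (\<Sum>i\<in>I. cinner (f i) x *\<^sub>C f i) \<in> orth_compl (cspan (f ` I))"
proof -
  let ?p = "x - (\<Sum>i\<in>I. cinner (f i) x *\<^sub>C f i)"
  have orth: "cinner (f j) ?p = 0" if "j \<in> I" for j
    using ON_delta2[OF ON fin that, of "\<lambda>i. cinner (f i) x"]
    by (simp add: cinner_diff_right cinner_sum_right cinner_scaleC_right)
  show ?thesis
    unfolding orth_compl_def
  proof safe
    fix y assume y: "y \<in> cspan (f ` I)"
    have "cinner y ?p = (\<Sum>i\<in>I. cnj (cinner (f i) y) * cinner (f i) ?p)"
      by (subst span_repr[OF ON fin y]) (simp add: cinner_sum_left cinner_scaleC_left)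
    also have "\<dots> = 0" using orth by simp
    finally show "cinner y ?p = 0" .
  qed
qed

lemma csubspace_Int: "csubspace A \<Longrightarrow> csubspace B \<Longrightarrow> csubspace (A \<inter> B)"
  unfolding csubspace_def by blast

lemma ON_subset: "orthonormal_on I f \<Longrightarrow> J \<subseteq> I \<Longrightarrow> orthonormal_on J f"
  unfolding orthonormal_on_def by blast

lemma csubspace_span:
  assumes ON: "orthonormal_on I f" and fin: "finite I"
  shows "csubspace (cspan (f ` I))"
  unfolding csubspace_def
proof safe
  show "0 \<in> cspan (f ` I)" using in_span_sum[OF ON fin, of "\<lambda>_. 0"] by simp
  fix x y assume x: "x \<in> cspan (f ` I)" and y: "y \<in> cspan (f ` I)"
  have "x + y = (\<Sum>i\<in>I. (cinner (f i) x + cinner (f i) y) *\<^sub>C f i)"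
    by (subst span_repr[OF ON fin x], subst span_repr[OF ON fin y]) (simp add: scaleC_add_left sum.distrib)
  then show "x + y \<in> cspan (f ` I)" using in_span_sum[OF ON fin] by simp
next
  fix a x assume x: "x \<in> cspan (f ` I)"
  have "a *\<^sub>C x = (\<Sum>i\<in>I. (a * cinner (f i) x) *\<^sub>C f i)"
    by (subst span_repr[OF ON fin x]) (simp add: scaleC_sum_right)
  then show "a *\<^sub>C x \<in> cspan (f ` I)" using in_span_sum[OF ON fin] by simp
qed

lemma csubspace_orth_compl: "csubspace (orth_compl S)"
  unfolding csubspace_def orth_compl_def by (auto simp: cinner_add_right cinner_scaleC_right)

lemma proj_self_left:
  assumes ON: "orthonormal_on I f" and fin: "finite I" and y: "y \<in> cspan (f ` I)"
  shows "cinner (\<Sum>i\<in>I. cinner (f i) z *\<^sub>C f i) y = cinner z y"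
proof -
  have "cinner z y = (\<Sum>i\<in>I. cinner (f i) y * cinner z (f i))"
    by (subst span_repr[OF ON fin y]) (simp add: cinner_sum_right cinner_scaleC_right)
  moreover have "cinner (\<Sum>i\<in>I. cinner (f i) z *\<^sub>C f i) y = (\<Sum>i\<in>I. cnj (cinner (f i) z) * cinner (f i) y)"
    by (simp add: cinner_sum_left cinner_scaleC_left)
  moreover have "cnj (cinner (f i) z) = cinner z (f i)" for i by (metis cinner_commute complex_cnj_cnj)
  ultimately show ?thesis by (simp add: mult.commute)
qed

lemma proj_self_right:
  assumes ON: "orthonormal_on I f" and fin: "finite I" and y: "y \<in> cspan (f ` I)"
  shows "cinner y (\<Sum>i\<in>I. cinner (f i) z *\<^sub>C f i) = cinner y z"
  using proj_self_left[OF assms, of z] by (metis cinner_commute)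

lemma final_arith:
  fixes a t \<alpha> G N s :: real
  assumes s: "s = sqrt (a\<^sup>2 + t\<^sup>2)" and a0: "0 \<le> a" and at: "a \<le> \<alpha> * t" and al: "\<alpha> \<ge> 0"
    and t0: "t \<ge> 0" and G: "G > 0" and Gt: "G * t \<le> N"
  shows "s \<le> N / G * sqrt (1 + \<alpha>\<^sup>2)"
proof -
  have "a\<^sup>2 \<le> (\<alpha> * t)\<^sup>2" using a0 at by (intro power_mono) auto
  then have "a\<^sup>2 + t\<^sup>2 \<le> (t * sqrt (1 + \<alpha>\<^sup>2))\<^sup>2" by (simp add: power_mult_distrib algebra_simps)
  then have "s \<le> t * sqrt (1 + \<alpha>\<^sup>2)" unfolding s using t0 by (intro real_le_lsqrt) auto
  also have "\<dots> \<le> N / G * sqrt (1 + \<alpha>\<^sup>2)" using Gt G by (intro mult_right_mono) (auto simp: field_simps)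
  finally show ?thesis .
qed

lemma main:
  fixes D :: "'a::{complex_inner, complete_space} set"
    and A :: "'a \<Rightarrow> 'a"
    and k :: nat
    and q :: "nat \<Rightarrow> 'a"
    and \<Omega> :: "nat \<Rightarrow> nat \<Rightarrow> complex"
    and lh :: "nat \<Rightarrow> real"
    and u :: 'a
    and lam :: complex
  assumes sa: "self_adjoint_op D A"
    and k2: "k \<ge> 2"
    and qD: "\<forall>i\<in>{1..k}. q i \<in> D"
    and q_orthonormal: "\<forall>i\<in>{1..k}. \<forall>j\<in>{1..k}. cinner (q i) (q j) = (if i = j then 1 else 0)"
    and \<Omega>_unitary: "\<forall>i\<in>{1..k}. \<forall>j\<in>{1..k}.
                     (\<Sum>l=1..k. cnj (\<Omega> l i) * \<Omega> l j) = (if i = j then 1 else 0)"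
    and eigdecomp: "\<forall>i\<in>{1..k}. \<forall>j\<in>{1..k}.
                     cinner (q i) (A (q j)) = (\<Sum>l=1..k. \<Omega> i l * complex_of_real (lh l) * cnj (\<Omega> j l))"
    and uD: "u \<in> D"
    and eig: "A u = lam *\<^sub>C u"
    and unorm: "norm u = 1"
    and uh_def: "uh = (\<lambda>j. \<Sum>i=1..k. \<Omega> i j *\<^sub>C q i)"
    and Q_def: "Q = cspan (q ` {1..k})"
    and P1_def: "P1 = orth_proj (cspan {uh 1})"
    and Q2_def: "Q2 = cspan (uh ` {2..k})"
    and P2_def: "P2 = orth_proj Q2"
    and Q3_def: "Q3 = orth_compl Q"
    and P3_def: "P3 = orth_proj Q3"
    and P2i_def: "P2i = (\<lambda>i. orth_proj (cspan {uh i}))"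
    and nR_def: "nR = onorm (\<lambda>x. P3 (A (P1 x)) + P3 (A (P2 x)))"
    and nR1_def: "nR1 = onorm (\<lambda>x. P3 (A (P1 x)))"
    and nR2_def: "nR2 = onorm (\<lambda>x. P3 (A (P2 x)))"
    and nr_def: "nr = (\<lambda>i. onorm (\<lambda>x. P3 (A (P2 (P2i i x)))))"
    and gap_def: "gap = spec_dist lam (op_spectrum Q2 Q2 (\<lambda>x. P2 (A (P2 x))))"
    and Gap_def: "Gap = spec_dist lam (op_spectrum Q3 (D \<inter> Q3) (\<lambda>x. P3 (A (P3 x))))"
    and s_def: "s = sin (vangle u (uh 1))"
    and S2_def: "S2 = (\<Sum>i=2..k. (nr i)\<^sup>2 / cmod (lam - complex_of_real (lh i)))"
    and S1_def: "S1 = (\<Sum>i=2..k. nr i / cmod (lam - complex_of_real (lh i)))"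
  shows "(Gap > 0 \<and> gap > 0 \<longrightarrow>
           s \<le> nR / Gap * sqrt (1 + nR2\<^sup>2 / gap\<^sup>2) \<and>
           nR / Gap * sqrt (1 + nR2\<^sup>2 / gap\<^sup>2) \<le> nR / Gap * (1 + nR2 / gap))
      \<and> (gap > 0 \<and> Gap > nR2\<^sup>2 / gap \<longrightarrow>
           s \<le> nR1 / (Gap - nR2\<^sup>2 / gap) * sqrt (1 + nR2\<^sup>2 / gap\<^sup>2))
      \<and> ((\<forall>i\<in>{2..k}. lam \<noteq> complex_of_real (lh i)) \<and> Gap > S2 \<longrightarrow>
           s \<le> nR1 / (Gap - S2) * sqrt (1 + S1\<^sup>2))"
proof -
  define I where "I = {1..k}"
  define J2 where "J2 = {2..k}"
  have finI: "finite I" and finJ: "finite J2" by (auto simp: I_def J2_def)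
  have J2I: "J2 \<subseteq> I" by (auto simp: I_def J2_def)
  have oneI: "1 \<in> I" using k2 by (simp add: I_def)
  have one_notJ: "1 \<notin> J2" by (simp add: J2_def)
  have IJ: "I = insert 1 J2" using k2 by (auto simp: I_def J2_def)
  have Dsub: "csubspace D" and Alin: "\<And>x y a b. x \<in> D \<Longrightarrow> y \<in> D \<Longrightarrow> A (a *\<^sub>C x + b *\<^sub>C y) = a *\<^sub>C A x + b *\<^sub>C A y"
    and Asym: "\<And>x y. x \<in> D \<Longrightarrow> y \<in> D \<Longrightarrow> cinner (A x) y = cinner x (A y)"
    using sa unfolding self_adjoint_op_def densely_defined_linear_def by auto
  have ONq: "orthonormal_on I q" using q_orthonormal by (simp add: orthonormal_on_def I_def)
  have Om: "\<And>i j. i \<in> I \<Longrightarrow> j \<in> I \<Longrightarrow> (\<Sum>l\<in>I. cnj (\<Omega> l i) * \<Omega> l j) = (if i = j then 1 else 0)"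
    using \<Omega>_unitary by (simp add: I_def)
  have Omr: "\<And>a b. a \<in> I \<Longrightarrow> b \<in> I \<Longrightarrow> (\<Sum>j\<in>I. \<Omega> a j * cnj (\<Omega> b j)) = (if a = b then 1 else 0)"
    using unitary_rows[OF \<Omega>_unitary] by (simp add: I_def)
  have uh_def': "uh j = (\<Sum>i\<in>I. \<Omega> i j *\<^sub>C q i)" for j by (simp add: uh_def I_def)
  have ONu: "orthonormal_on I uh"
    unfolding orthonormal_on_def
  proof (intro ballI)
    fix i j assume i: "i \<in> I" and j: "j \<in> I"
    have "cinner (uh i) (uh j) = (\<Sum>a\<in>I. cnj (\<Omega> a i) * (\<Sum>b\<in>I. \<Omega> b j * cinner (q a) (q b)))"
      unfolding uh_def' by (simp add: cinner_sum_left cinner_sum_right cinner_scaleC_left cinner_scaleC_right sum_distrib_left)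
        (subst sum.swap, simp add: mult.left_commute)
    also have "\<dots> = (\<Sum>a\<in>I. cnj (\<Omega> a i) * \<Omega> a j)"
      using ON_delta2[OF ONq finI] by (intro sum.cong) auto
    finally show "cinner (uh i) (uh j) = (if i = j then 1 else 0)" using Om[OF i j] by simp
  qed
  have ONuJ: "orthonormal_on J2 uh" and ONu1: "orthonormal_on {1} uh" and ONui: "\<And>i. i \<in> I \<Longrightarrow> orthonormal_on {i} uh"
    using ON_subset[OF ONu] J2I oneI by auto
  have uhD: "uh j \<in> D" for j unfolding uh_def' using qD Dsub by (auto intro!: csub_sum csub_scale simp: I_def)
  have norm_uh: "norm (uh j) = 1" if "j \<in> I" for j
    using ONu that norm_eq_sqrt_cinner[of "uh j"] by (simp add: orthonormal_on_def)
  have Asum: "\<And>J c y. finite J \<Longrightarrow> (\<And>j. j \<in> J \<Longrightarrow> y j \<in> D) \<Longrightarrow> A (\<Sum>j\<in>J. c j *\<^sub>C y j) = (\<Sum>j\<in>J. c j *\<^sub>C A (y j))"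
    by (rule lin_sum[OF _ _ Dsub Alin])
  have Aee: "cinner (uh i) (A (uh j)) = (if i = j then complex_of_real (lh i) else 0)" if i: "i \<in> I" and j: "j \<in> I" for i j
  proof -
    define F where "F a b l = complex_of_real (lh l) * ((cnj (\<Omega> a i) * \<Omega> a l) * (cnj (\<Omega> b l) * \<Omega> b j))" for a b l
    have "cinner (uh i) (A (uh j)) = (\<Sum>b\<in>I. \<Sum>a\<in>I. \<Omega> b j * (cnj (\<Omega> a i) * cinner (q a) (A (q b))))"
      unfolding uh_def' using qD
      by (subst Asum[OF finI]) (auto simp: I_def cinner_sum_left cinner_sum_right cinner_scaleC_left cinner_scaleC_right sum_distrib_left)
    also have "\<dots> = (\<Sum>a\<in>I. \<Sum>b\<in>I. \<Omega> b j * (cnj (\<Omega> a i) * cinner (q a) (A (q b))))" by (rule sum.swap)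
    also have "\<dots> = (\<Sum>a\<in>I. \<Sum>b\<in>I. cnj (\<Omega> a i) * (\<Omega> b j * cinner (q a) (A (q b))))" by (simp add: mult.left_commute)
    also have "\<dots> = (\<Sum>a\<in>I. \<Sum>b\<in>I. cnj (\<Omega> a i) * (\<Omega> b j * (\<Sum>l\<in>I. \<Omega> a l * complex_of_real (lh l) * cnj (\<Omega> b l))))"
      using eigdecomp by (intro sum.cong refl) (simp add: I_def)
    also have "\<dots> = (\<Sum>a\<in>I. \<Sum>b\<in>I. \<Sum>l\<in>I. F a b l)"
      by (simp add: F_def sum_distrib_left mult_ac)
    also have "\<dots> = (\<Sum>a\<in>I. \<Sum>l\<in>I. \<Sum>b\<in>I. F a b l)" by (rule sum.cong[OF refl], rule sum.swap)
    also have "\<dots> = (\<Sum>l\<in>I. \<Sum>a\<in>I. \<Sum>b\<in>I. F a b l)" by (rule sum.swap)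
    also have "\<dots> = (\<Sum>l\<in>I. complex_of_real (lh l) * ((\<Sum>a\<in>I. cnj (\<Omega> a i) * \<Omega> a l) * (\<Sum>b\<in>I. cnj (\<Omega> b l) * \<Omega> b j)))"
      by (simp only: F_def sum_product) (simp only: sum_distrib_left)
    also have "\<dots> = (\<Sum>l\<in>I. if l = i then (if i = j then complex_of_real (lh i) else 0) else 0)"
      using Om i j by (intro sum.cong refl) auto
    also have "\<dots> = (if i = j then complex_of_real (lh i) else 0)" using finI i by simp
    finally show ?thesis .
  qed
  have P1f: "P1 x = cinner (uh 1) x *\<^sub>C uh 1" for x
    using orth_proj_span[OF ONu1, of x] by (simp add: P1_def)
  have Q2s: "Q2 = cspan (uh ` J2)" by (simp add: Q2_def J2_def)
  have P2f: "P2 x = (\<Sum>j\<in>J2. cinner (uh j) x *\<^sub>C uh j)" for x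
    using orth_proj_span[OF ONuJ finJ, of x] by (simp add: P2_def Q2s)
  have P2if: "P2i i x = cinner (uh i) x *\<^sub>C uh i" if "i \<in> I" for i x
    using orth_proj_span[OF ONui[OF that], of x] by (simp add: P2i_def)
  have QE: "(\<Sum>a\<in>I. cinner (q a) x *\<^sub>C q a) = (\<Sum>j\<in>I. cinner (uh j) x *\<^sub>C uh j)" for x
  proof -
    have cu: "cinner (uh j) x = (\<Sum>a\<in>I. cnj (\<Omega> a j) * cinner (q a) x)" for j
      unfolding uh_def' by (simp add: cinner_sum_left cinner_scaleC_left)
    have "(\<Sum>j\<in>I. cinner (uh j) x *\<^sub>C uh j) = (\<Sum>j\<in>I. \<Sum>b\<in>I. (cinner (uh j) x * \<Omega> b j) *\<^sub>C q b)"
      unfolding uh_def'[of j for j] by (simp add: scaleC_sum_right)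
    also have "\<dots> = (\<Sum>b\<in>I. \<Sum>j\<in>I. (cinner (uh j) x * \<Omega> b j) *\<^sub>C q b)" by (rule sum.swap)
    also have "\<dots> = (\<Sum>b\<in>I. (\<Sum>j\<in>I. cinner (uh j) x * \<Omega> b j) *\<^sub>C q b)" by (simp add: scaleC_sum_left)
    also have "\<dots> = (\<Sum>b\<in>I. cinner (q b) x *\<^sub>C q b)"
    proof (rule sum.cong[OF refl])
      fix b assume b: "b \<in> I"
      have "(\<Sum>j\<in>I. cinner (uh j) x * \<Omega> b j) = (\<Sum>j\<in>I. \<Sum>a\<in>I. (\<Omega> b j * cnj (\<Omega> a j)) * cinner (q a) x)"
        unfolding cu by (simp add: sum_distrib_right sum_distrib_left mult_ac)
      also have "\<dots> = (\<Sum>a\<in>I. \<Sum>j\<in>I. (\<Omega> b j * cnj (\<Omega> a j)) * cinner (q a) x)" by (rule sum.swap)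
      also have "\<dots> = (\<Sum>a\<in>I. (\<Sum>j\<in>I. \<Omega> b j * cnj (\<Omega> a j)) * cinner (q a) x)" by (simp add: sum_distrib_right)
      also have "\<dots> = (\<Sum>a\<in>I. if b = a then cinner (q a) x else 0)" using Omr b by (intro sum.cong refl) auto
      also have "\<dots> = cinner (q b) x" using finI b by simp
      finally show "(\<Sum>j\<in>I. cinner (uh j) x * \<Omega> b j) *\<^sub>C q b = cinner (q b) x *\<^sub>C q b" by simp
    qed
    finally show ?thesis by simp
  qed
  have Qs: "Q = cspan (q ` I)" by (simp add: Q_def I_def)
  have P3f: "P3 x = x - (\<Sum>j\<in>I. cinner (uh j) x *\<^sub>C uh j)" for x
    using orth_proj_compl_span[OF ONq finI, of x] by (simp add: P3_def Q3_def Qs QE)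
  have P3Q3: "P3 x \<in> Q3" for x
    using compl_mem[OF ONq finI, of x] by (simp add: P3f Q3_def Qs QE)
  have uhQ: "uh j \<in> Q" for j unfolding uh_def' Qs by (rule in_span_sum[OF ONq finI])
  have Q3perp: "cinner (uh j) y = 0" if "y \<in> Q3" for j y
    using that uhQ[of j] by (simp add: Q3_def orth_compl_def)
  have Q3perp': "cinner y (uh j) = 0" if "y \<in> Q3" for j y
    using Q3perp[OF that, of j] by (subst cinner_commute) simp
  have P3id: "P3 y = y" if "y \<in> Q3" for y using Q3perp[OF that] by (simp add: P3f)
  have P3lin: "P3 (a *\<^sub>C x + b *\<^sub>C y) = a *\<^sub>C P3 x + b *\<^sub>C P3 y" for a b x y
    by (simp add: P3f cinner_add_right cinner_scaleC_right scaleC_add_left scaleC_add_right scaleC_diff_right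
        scaleC_sum_right sum.distrib algebra_simps)
  have P3sum: "P3 (\<Sum>j\<in>J. c j *\<^sub>C y j) = (\<Sum>j\<in>J. c j *\<^sub>C P3 (y j))" if "finite J" for J c y
    by (rule lin_sum[where D=UNIV, OF that _ _ P3lin]) (auto simp: csubspace_def)
  have P3left: "cinner (P3 z) w = cinner z w" if "w \<in> Q3" for z w
    using Q3perp[OF that] by (simp add: P3f cinner_diff_left cinner_sum_left cinner_scaleC_left)
  have P3right: "cinner w (P3 z) = cinner w z" if "w \<in> Q3" for z w
    using Q3perp'[OF that] by (simp add: P3f cinner_diff_right cinner_sum_right cinner_scaleC_right)
  define g where "g j = P3 (A (uh j))" for j
  have gQ3: "g j \<in> Q3" for j by (simp add: g_def P3Q3)
  have Adec: "A (uh j) = g j + complex_of_real (lh j) *\<^sub>C uh j" if j: "j \<in> I" for j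
  proof -
    have "(\<Sum>i\<in>I. cinner (uh i) (A (uh j)) *\<^sub>C uh i) = (\<Sum>i\<in>I. if i = j then complex_of_real (lh j) *\<^sub>C uh j else 0)"
      using Aee j by (intro sum.cong refl) auto
    also have "\<dots> = complex_of_real (lh j) *\<^sub>C uh j" using finI j by simp
    finally show ?thesis by (simp add: g_def P3f)
  qed
  define c where "c j = cinner (uh j) u" for j
  define x1 where "x1 = c 1 *\<^sub>C uh 1"
  define x2 where "x2 = (\<Sum>j\<in>J2. c j *\<^sub>C uh j)"
  define x3 where "x3 = P3 u"
  have x1P: "x1 = P1 u" by (simp add: x1_def P1f c_def)
  have x2P: "x2 = P2 u" by (simp add: x2_def P2f c_def)
  have sumI: "(\<Sum>j\<in>I. f j) = f 1 + (\<Sum>j\<in>J2. f j)" for f :: "nat \<Rightarrow> 'a"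
    unfolding IJ using finJ one_notJ by simp
  have u_dec: "u = x1 + x2 + x3" unfolding x3_def P3f sumI by (simp add: x1_def x2_def c_def)
  have x3Q3: "x3 \<in> Q3" by (simp add: x3_def P3Q3)
  have x1D: "x1 \<in> D" unfolding x1_def by (rule csub_scale[OF Dsub uhD])
  have x2D: "x2 \<in> D" unfolding x2_def using uhD Dsub by (auto intro!: csub_sum csub_scale)
  have x3D: "x3 \<in> D"
  proof -
    have "x3 = u - (x1 + x2)" using u_dec by (simp add: algebra_simps)
    then show ?thesis using uD x1D x2D Dsub by (auto intro!: csub_diff csub_add)
  qed
  have x2Q2: "x2 \<in> Q2" unfolding x2_def Q2s by (rule in_span_sum[OF ONuJ finJ])
  have cx2: "cinner (uh j) x2 = c j" if "j \<in> J2" for j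
    unfolding x2_def using ON_delta2[OF ONuJ finJ that, of c]
    by (simp add: cinner_sum_right cinner_scaleC_right)
  have x12: "cinner x1 x2 = 0"
  proof -
    have "cinner (uh 1) x2 = 0" unfolding x2_def using ONu oneI J2I one_notJ
      by (auto simp: cinner_sum_right cinner_scaleC_right orthonormal_on_def subset_iff intro!: sum.neutral)
    then show ?thesis by (simp add: x1_def cinner_scaleC_left)
  qed
  have x123: "cinner (x1 + x2) x3 = 0"
    using Q3perp[OF x3Q3] by (simp add: x1_def x2_def cinner_add_left cinner_sum_left cinner_scaleC_left)
  have nx1: "norm x1 = cmod (c 1)" using norm_uh[OF oneI] by (simp add: x1_def norm_scaleC)
  have norms: "(norm x1)\<^sup>2 + (norm x2)\<^sup>2 + (norm x3)\<^sup>2 = 1"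
    using pythag[OF x123] pythag[OF x12] unorm u_dec by simp
  have c1le: "cmod (c 1) \<le> 1" using cauchy_schwarz[of "uh 1" u] norm_uh[OF oneI] unorm by (simp add: c_def)
  have s_eq: "s = sqrt ((norm x2)\<^sup>2 + (norm x3)\<^sup>2)"
  proof -
    have "s = sin (arccos (cmod (c 1)))" by (simp add: s_def vangle_def c_def)
    also have "\<dots> = sqrt (1 - (cmod (c 1))\<^sup>2)" using c1le norm_ge_zero[of "c 1"] by (intro sin_arccos) linarith+
    also have "1 - (cmod (c 1))\<^sup>2 = (norm x2)\<^sup>2 + (norm x3)\<^sup>2" using norms nx1 by simp
    finally show ?thesis .
  qed
  have lamr: "Im lam = 0"
  proof -
    have uu: "cinner u u = 1" using unorm cinner_self[of u] by simp
    have "cinner (A u) u = cinner u (A u)" using Asym[OF uD uD] .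
    then have "cnj lam = lam" using uu by (simp add: eig cinner_scaleC_left cinner_scaleC_right)
    then show ?thesis by (metis Reals_cnj_iff complex_is_Real_iff)
  qed
  have Ascale: "A (a *\<^sub>C x) = a *\<^sub>C A x" if "x \<in> D" for a x using Alin[OF that that, of a 0] by simp
  have Aadd: "A (x + y) = A x + A y" if "x \<in> D" "y \<in> D" for x y using Alin[OF that, of 1 1] by simp
  have P3scale: "P3 (a *\<^sub>C x) = a *\<^sub>C P3 x" for a x using P3lin[of a x 0 x] by simp
  have P3add: "P3 (x + y) = P3 x + P3 y" for x y using P3lin[of 1 x 1 y] by simp
  have P3diff: "P3 (x - y) = P3 x - P3 y" for x y
    using P3lin[of 1 x "-1" y] by (simp add: scaleC_minus_left)
  have F1f: "P3 (A (P1 x)) = cinner (uh 1) x *\<^sub>C g 1" for x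
    by (simp add: P1f Ascale[OF uhD] P3scale g_def)
  have F2f: "P3 (A (P2 x)) = (\<Sum>j\<in>J2. cinner (uh j) x *\<^sub>C g j)" for x
    unfolding P2f using uhD by (simp add: Asum[OF finJ] P3sum[OF finJ] g_def)
  have Fif: "P3 (A (P2 (P2i i x))) = cinner (uh i) x *\<^sub>C g i" if i: "i \<in> J2" for i x
  proof -
    have "P2 (P2i i x) = cinner (uh i) x *\<^sub>C (\<Sum>j\<in>J2. cinner (uh j) (uh i) *\<^sub>C uh j)"
      using i J2I by (auto simp: P2if P2f cinner_scaleC_right scaleC_sum_right mult.commute)
    also have "\<dots> = cinner (uh i) x *\<^sub>C uh i" using ON_delta[OF ONuJ finJ i] by simp
    finally show ?thesis by (simp add: Ascale[OF uhD] P3scale g_def)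
  qed
  have B1: "norm (P3 (A (P1 x))) \<le> norm (g 1) * norm x" for x
  proof -
    have "norm (P3 (A (P1 x))) = cmod (cinner (uh 1) x) * norm (g 1)" by (simp add: F1f norm_scaleC)
    also have "\<dots> \<le> (norm (uh 1) * norm x) * norm (g 1)" by (intro mult_right_mono cauchy_schwarz) auto
    finally show ?thesis using norm_uh[OF oneI] by (simp add: mult.commute)
  qed
  have B2: "norm (P3 (A (P2 x))) \<le> (\<Sum>j\<in>J2. norm (uh j) * norm (g j)) * norm x" for x
    unfolding F2f by (rule sum_inner_bound)
  have Bi: "norm (P3 (A (P2 (P2i i x)))) \<le> norm (g i) * norm x" if i: "i \<in> J2" for i x
  proof -
    have "norm (P3 (A (P2 (P2i i x)))) = cmod (cinner (uh i) x) * norm (g i)" by (simp add: Fif[OF i] norm_scaleC)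
    also have "\<dots> \<le> (norm (uh i) * norm x) * norm (g i)" by (intro mult_right_mono cauchy_schwarz) auto
    finally show ?thesis using norm_uh i J2I by (auto simp: mult.commute)
  qed
  have B: "norm (P3 (A (P1 x)) + P3 (A (P2 x))) \<le> (norm (g 1) + (\<Sum>j\<in>J2. norm (uh j) * norm (g j))) * norm x" for x
    using norm_triangle_ineq[of "P3 (A (P1 x))" "P3 (A (P2 x))"] B1[of x] B2[of x] by (simp add: algebra_simps)
  have nRb: "norm (P3 (A (P1 x)) + P3 (A (P2 x))) \<le> nR * norm x" for x
    unfolding nR_def by (rule onorm_le(1), rule B)
  have nR0: "nR \<ge> 0" unfolding nR_def by (rule onorm_le(2), rule B)
  have nR1b: "norm (P3 (A (P1 x))) \<le> nR1 * norm x" for x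
    unfolding nR1_def by (rule onorm_le(1), rule B1)
  have nR10: "nR1 \<ge> 0" unfolding nR1_def by (rule onorm_le(2), rule B1)
  have nR2b: "norm (P3 (A (P2 x))) \<le> nR2 * norm x" for x
    unfolding nR2_def by (rule onorm_le(1), rule B2)
  have nR20: "nR2 \<ge> 0" unfolding nR2_def by (rule onorm_le(2), rule B2)
  have nrb: "norm (g i) \<le> nr i" and nr0: "nr i \<ge> 0" if i: "i \<in> J2" for i
  proof -
    have "norm (P3 (A (P2 (P2i i (uh i))))) \<le> nr i * norm (uh i)"
      unfolding nr_def by (rule onorm_le(1), rule Bi[OF i])
    moreover have "cinner (uh i) (uh i) = 1" using ONu i J2I by (auto simp: orthonormal_on_def)
    ultimately show "norm (g i) \<le> nr i" using Fif[OF i, of "uh i"] norm_uh i J2I by auto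
    show "nr i \<ge> 0" unfolding nr_def by (rule onorm_le(2), rule Bi[OF i])
  qed
  have Q3sub: "csubspace Q3" unfolding Q3_def by (rule csubspace_orth_compl)
  have G3: "Gap * norm x3 \<le> norm (P3 (A (P3 x3)) - lam *\<^sub>C x3)" if Gp: "Gap > 0"
    unfolding Gap_def
  proof (rule spec_bound[where V=Q3 and Dom="D \<inter> Q3"])
    show "csubspace (D \<inter> Q3)" by (rule csubspace_Int[OF Dsub Q3sub])
    show "\<forall>x\<in>D \<inter> Q3. \<forall>y\<in>D \<inter> Q3. \<forall>a b. P3 (A (P3 (a *\<^sub>C x + b *\<^sub>C y))) = a *\<^sub>C P3 (A (P3 x)) + b *\<^sub>C P3 (A (P3 y))"
    proof (intro ballI allI)
      fix x y a b assume x: "x \<in> D \<inter> Q3" and y: "y \<in> D \<inter> Q3"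
      have "P3 (a *\<^sub>C x + b *\<^sub>C y) = a *\<^sub>C x + b *\<^sub>C y" using x y by (simp add: P3lin P3id)
      then show "P3 (A (P3 (a *\<^sub>C x + b *\<^sub>C y))) = a *\<^sub>C P3 (A (P3 x)) + b *\<^sub>C P3 (A (P3 y))"
        using x y by (simp add: P3id Alin P3lin)
    qed
    show "\<forall>x\<in>D \<inter> Q3. \<forall>y\<in>D \<inter> Q3. cinner (P3 (A (P3 x))) y = cinner x (P3 (A (P3 y)))"
      by (auto simp: P3id P3left P3right Asym)
  qed (use Gp lamr x3Q3 x3D P3Q3 Gap_def Q3sub in auto)
  have T3x3: "P3 (A (P3 x3)) - lam *\<^sub>C x3 = - (P3 (A (P1 u)) + P3 (A (P2 u)))"
  proof -
    have "A u = A x1 + A x2 + A x3" using u_dec x1D x2D x3D Dsub by (simp add: Aadd csub_add)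
    then have "A x3 = lam *\<^sub>C u - A x1 - A x2" by (simp add: eig algebra_simps)
    then have "P3 (A x3) = lam *\<^sub>C x3 - P3 (A x1) - P3 (A x2)" by (simp add: P3diff P3scale x3_def)
    then show ?thesis using P3id[OF x3Q3] by (simp add: x1P x2P)
  qed
  have Q2sub: "csubspace Q2" unfolding Q2s by (rule csubspace_span[OF ONuJ finJ])
  have Q2repr: "y = (\<Sum>j\<in>J2. cinner (uh j) y *\<^sub>C uh j)" if "y \<in> Q2" for y
    using span_repr[OF ONuJ finJ, of y] that by (simp add: Q2s)
  have P2id: "P2 y = y" if "y \<in> Q2" for y using Q2repr[OF that] by (simp add: P2f)
  have P2Q2: "P2 y \<in> Q2" for y unfolding P2f Q2s by (rule in_span_sum[OF ONuJ finJ])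
  have Q2D: "y \<in> D" if "y \<in> Q2" for y
    using Q2repr[OF that] uhD Dsub by (metis (no_types, lifting) csub_scale csub_sum)
  have P2lin: "P2 (a *\<^sub>C x + b *\<^sub>C y) = a *\<^sub>C P2 x + b *\<^sub>C P2 y" for a b x y
    by (simp add: P2f cinner_add_right cinner_scaleC_right scaleC_add_left
        scaleC_sum_right sum.distrib algebra_simps)
  have P2left: "cinner (P2 z) w = cinner z w" if "w \<in> Q2" for z w
    unfolding P2f using proj_self_left[OF ONuJ finJ] that Q2s by simp
  have P2right: "cinner w (P2 z) = cinner w z" if "w \<in> Q2" for z w
    unfolding P2f using proj_self_right[OF ONuJ finJ] that Q2s by simp
  have G2: "gap * norm x2 \<le> norm (P2 (A (P2 x2)) - lam *\<^sub>C x2)" if gp: "gap > 0"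
    unfolding gap_def
  proof (rule spec_bound[where V=Q2 and Dom=Q2])
    show "\<forall>x\<in>Q2. \<forall>y\<in>Q2. \<forall>a b. P2 (A (P2 (a *\<^sub>C x + b *\<^sub>C y))) = a *\<^sub>C P2 (A (P2 x)) + b *\<^sub>C P2 (A (P2 y))"
    proof (intro ballI allI)
      fix x y a b assume x: "x \<in> Q2" and y: "y \<in> Q2"
      have "P2 (a *\<^sub>C x + b *\<^sub>C y) = a *\<^sub>C x + b *\<^sub>C y" using x y by (simp add: P2lin P2id)
      then show "P2 (A (P2 (a *\<^sub>C x + b *\<^sub>C y))) = a *\<^sub>C P2 (A (P2 x)) + b *\<^sub>C P2 (A (P2 y))"
        using x y Q2D by (simp add: P2id Alin P2lin)
    qed
    show "\<forall>x\<in>Q2. \<forall>y\<in>Q2. cinner (P2 (A (P2 x))) y = cinner x (P2 (A (P2 y)))"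
      using Q2D by (auto simp: P2id P2left P2right Asym)
  qed (use gp lamr x2Q2 P2Q2 gap_def Q2sub in auto)
  have T2x2: "P2 (A (P2 x2)) - lam *\<^sub>C x2 = - P2 (A x3)"
  proof -
    have "A u = A x1 + A x2 + A x3" using u_dec x1D x2D x3D Dsub by (simp add: Aadd csub_add)
    then have e1: "P2 (A u) = P2 (A x1) + P2 (A x2) + P2 (A x3)"
      using P2lin[of 1 _ 1] by simp
    have "P2 (A x1) = c 1 *\<^sub>C P2 (A (uh 1))" unfolding x1_def using P2lin[of _ _ 0] by (simp add: Ascale[OF uhD])
    also have "P2 (A (uh 1)) = 0" unfolding P2f using Aee oneI J2I one_notJ
      by (intro sum.neutral) (auto simp: subset_iff)
    finally have e2: "P2 (A x1) = 0" by simp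
    have "P2 (A u) = lam *\<^sub>C x2" using P2lin[of lam u 0] by (simp add: eig x2P)
    then show ?thesis using e1 e2 P2id[OF x2Q2] by (simp add: algebra_simps)
  qed
  have Wb: "norm (P2 (A x3)) \<le> nR2 * norm x3"
  proof -
    define w where "w = P2 (A x3)"
    have wQ2: "w \<in> Q2" by (simp add: w_def P2Q2)
    have "cinner w w = cinner w (A x3)" by (simp add: w_def P2right[OF P2Q2])
    also have "\<dots> = cinner (A w) x3" using Asym[OF Q2D[OF wQ2] x3D] by simp
    also have "\<dots> = cinner (P3 (A (P2 w))) x3" by (simp add: P2id[OF wQ2] P3left[OF x3Q3])
    finally have ww: "cinner w w = cinner (P3 (A (P2 w))) x3" .
    have "(norm w)\<^sup>2 = cmod (cinner w w)" by (simp add: cinner_self norm_power)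
    also have "\<dots> \<le> norm (P3 (A (P2 w))) * norm x3" unfolding ww by (rule cauchy_schwarz)
    also have "\<dots> \<le> (nR2 * norm w) * norm x3" by (intro mult_right_mono nR2b) auto
    finally have "norm w * norm w \<le> norm w * (nR2 * norm x3)" by (simp add: power2_eq_square mult_ac)
    then have "norm w \<le> nR2 * norm x3" if "norm w > 0" using that by simp
    moreover have "nR2 * norm x3 \<ge> 0" using nR20 by simp
    ultimately show ?thesis unfolding w_def[symmetric] by (cases "norm w > 0") auto
  qed
  have nu: "norm (P3 (A (P1 u)) + P3 (A (P2 u))) \<le> nR" using nRb[of u] unorm by simp
  have nu1: "norm (P3 (A (P1 u))) \<le> nR1" using nR1b[of u] unorm by simp
  have nu2: "norm (P3 (A (P2 u))) \<le> nR2 * norm x2" using nR2b[of x2] P2id[OF x2Q2] by (simp add: x2P)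
  have H3: "Gap * norm x3 \<le> norm (P3 (A (P1 u)) + P3 (A (P2 u)))" if "Gap > 0"
  proof -
    have "norm (P3 (A (P3 x3)) - lam *\<^sub>C x3) = norm (P3 (A (P1 u)) + P3 (A (P2 u)))"
      unfolding T3x3 by (rule norm_minus_cancel)
    then show ?thesis using G3[OF that] by simp
  qed
  have H3': "Gap * norm x3 \<le> norm (P3 (A (P1 u))) + norm (P3 (A (P2 u)))" if "Gap > 0"
    using H3[OF that] norm_triangle_ineq[of "P3 (A (P1 u))" "P3 (A (P2 u))"] by linarith
  have H2: "norm x2 \<le> nR2 / gap * norm x3" if gp: "gap > 0"
  proof -
    have "norm (P2 (A (P2 x2)) - lam *\<^sub>C x2) = norm (P2 (A x3))"
      unfolding T2x2 by (rule norm_minus_cancel)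
    then have "gap * norm x2 \<le> nR2 * norm x3" using G2[OF gp] Wb by simp
    then show ?thesis using gp by (simp add: field_simps)
  qed
  have claim1: "s \<le> nR / Gap * sqrt (1 + nR2\<^sup>2 / gap\<^sup>2) \<and>
           nR / Gap * sqrt (1 + nR2\<^sup>2 / gap\<^sup>2) \<le> nR / Gap * (1 + nR2 / gap)"
    if Gp: "Gap > 0" and gp: "gap > 0"
  proof
    have "s \<le> nR / Gap * sqrt (1 + (nR2 / gap)\<^sup>2)"
      by (rule final_arith[OF s_eq _ H2[OF gp] _ _ Gp]) (use H3[OF Gp] nu nR20 gp in auto)
    then show "s \<le> nR / Gap * sqrt (1 + nR2\<^sup>2 / gap\<^sup>2)" by (simp add: power_divide)
    have a0: "nR2 / gap \<ge> 0" using nR20 gp by simp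
    have "sqrt (1 + (nR2 / gap)\<^sup>2) \<le> 1 + nR2 / gap"
    proof (rule real_le_lsqrt)
      show "1 + (nR2 / gap)\<^sup>2 \<le> (1 + nR2 / gap)\<^sup>2" using a0 by (simp add: power2_sum)
    qed (use a0 in auto)
    then have "sqrt (1 + nR2\<^sup>2 / gap\<^sup>2) \<le> 1 + nR2 / gap" by (simp add: power_divide)
    then show "nR / Gap * sqrt (1 + nR2\<^sup>2 / gap\<^sup>2) \<le> nR / Gap * (1 + nR2 / gap)"
      using nR0 Gp by (intro mult_left_mono) auto
  qed
  have claim2: "s \<le> nR1 / (Gap - nR2\<^sup>2 / gap) * sqrt (1 + nR2\<^sup>2 / gap\<^sup>2)"
    if gp: "gap > 0" and Gg: "Gap > nR2\<^sup>2 / gap"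
  proof -
    have Gp: "Gap > 0" using Gg gp by (smt (verit) divide_nonneg_pos zero_le_power2)
    have "Gap * norm x3 \<le> nR1 + nR2 * (nR2 / gap * norm x3)"
      using H3'[OF Gp] nu1 nu2 H2[OF gp] nR20 mult_left_mono[OF H2[OF gp] nR20] by linarith
    then have "(Gap - nR2\<^sup>2 / gap) * norm x3 \<le> nR1" by (simp add: power2_eq_square algebra_simps)
    then have "s \<le> nR1 / (Gap - nR2\<^sup>2 / gap) * sqrt (1 + (nR2 / gap)\<^sup>2)"
      by (intro final_arith[OF s_eq _ H2[OF gp]]) (use nR20 gp Gg in auto)
    then show ?thesis by (simp add: power_divide)
  qed
  have claim3: "s \<le> nR1 / (Gap - S2) * sqrt (1 + S1\<^sup>2)"
    if ne: "\<forall>i\<in>{2..k}. lam \<noteq> complex_of_real (lh i)" and GS: "Gap > S2"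
  proof -
    have S2s: "S2 = (\<Sum>i\<in>J2. (nr i)\<^sup>2 / cmod (lam - complex_of_real (lh i)))" by (simp add: S2_def J2_def)
    have S1s: "S1 = (\<Sum>i\<in>J2. nr i / cmod (lam - complex_of_real (lh i)))" by (simp add: S1_def J2_def)
    have dpos: "cmod (lam - complex_of_real (lh i)) > 0" if "i \<in> J2" for i using ne that by (simp add: J2_def)
    have S20: "S2 \<ge> 0" unfolding S2s by (intro sum_nonneg) simp
    have S10: "S1 \<ge> 0" unfolding S1s using nr0 by (intro sum_nonneg) simp
    have Gp: "Gap > 0" using GS S20 by simp
    have cb: "cmod (c i) \<le> nr i / cmod (lam - complex_of_real (lh i)) * norm x3" if i: "i \<in> J2" for i
    proof -
      have iI: "i \<in> I" using i J2I by auto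
      have "lam * c i = cinner (uh i) (A u)" by (simp add: eig c_def cinner_scaleC_right)
      also have "\<dots> = cinner (A (uh i)) u" using Asym[OF uhD uD] by simp
      also have "\<dots> = cinner (g i) u + complex_of_real (lh i) * c i"
        by (simp add: Adec[OF iI] cinner_add_left cinner_scaleC_left c_def)
      also have "cinner (g i) u = cinner (g i) x3" by (simp add: x3_def P3right[OF gQ3])
      finally have "(lam - complex_of_real (lh i)) * c i = cinner (g i) x3" by (simp add: algebra_simps)
      then have "cmod (lam - complex_of_real (lh i)) * cmod (c i) = cmod (cinner (g i) x3)" by (metis norm_mult)
      also have "\<dots> \<le> norm (g i) * norm x3" by (rule cauchy_schwarz)
      also have "\<dots> \<le> nr i * norm x3" using nrb[OF i] by (intro mult_right_mono) auto
      finally show ?thesis using dpos[OF i] by (simp add: field_simps)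
    qed
    have nx2: "norm x2 \<le> S1 * norm x3"
    proof -
      have "norm x2 \<le> (\<Sum>j\<in>J2. norm (c j *\<^sub>C uh j))" unfolding x2_def by (rule norm_sum)
      also have "\<dots> = (\<Sum>j\<in>J2. cmod (c j))" using norm_uh J2I by (intro sum.cong) (auto simp: norm_scaleC)
      also have "\<dots> \<le> (\<Sum>j\<in>J2. nr j / cmod (lam - complex_of_real (lh j)) * norm x3)" by (intro sum_mono cb)
      also have "\<dots> = S1 * norm x3" by (simp add: S1s sum_distrib_right)
      finally show ?thesis .
    qed
    have nF2: "norm (P3 (A (P2 u))) \<le> S2 * norm x3"
    proof -
      have "norm (P3 (A (P2 u))) \<le> (\<Sum>j\<in>J2. norm (c j *\<^sub>C g j))" unfolding F2f c_def[symmetric] by (rule norm_sum)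
      also have "\<dots> \<le> (\<Sum>j\<in>J2. (nr j)\<^sup>2 / cmod (lam - complex_of_real (lh j)) * norm x3)"
      proof (rule sum_mono)
        fix j assume j: "j \<in> J2"
        have "norm (c j *\<^sub>C g j) = cmod (c j) * norm (g j)" by (simp add: norm_scaleC)
        also have "\<dots> \<le> (nr j / cmod (lam - complex_of_real (lh j)) * norm x3) * nr j"
          using cb[OF j] nrb[OF j] nr0[OF j] by (intro mult_mono) auto
        finally show "norm (c j *\<^sub>C g j) \<le> (nr j)\<^sup>2 / cmod (lam - complex_of_real (lh j)) * norm x3"
          by (simp add: power2_eq_square field_simps)
      qed
      also have "\<dots> = S2 * norm x3" by (simp add: S2s sum_distrib_right)
      finally show ?thesis .
    qed
    have "Gap * norm x3 \<le> nR1 + S2 * norm x3" using H3'[OF Gp] nu1 nF2 by linarith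
    then have "(Gap - S2) * norm x3 \<le> nR1" by (simp add: algebra_simps)
    then show ?thesis by (intro final_arith[OF s_eq _ nx2]) (use S10 GS in auto)
  qed
  show ?thesis using claim1 claim2 claim3 by blast
qed

theorem theorem7p1:
  fixes D :: "'a::{complex_inner, complete_space} set"
    and A :: "'a \<Rightarrow> 'a"
    and k :: nat
    and q :: "nat \<Rightarrow> 'a"
    and \<Omega> :: "nat \<Rightarrow> nat \<Rightarrow> complex"
    and lh :: "nat \<Rightarrow> real"
    and u :: 'a
    and lam :: complex
  assumes sa: "self_adjoint_op D A"
    and k2: "k \<ge> 2"
    and qD: "\<forall>i\<in>{1..k}. q i \<in> D"
    and q_orthonormal: "\<forall>i\<in>{1..k}. \<forall>j\<in>{1..k}. cinner (q i) (q j) = (if i = j then 1 else 0)"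
    and \<Omega>_unitary: "\<forall>i\<in>{1..k}. \<forall>j\<in>{1..k}.
                     (\<Sum>l=1..k. cnj (\<Omega> l i) * \<Omega> l j) = (if i = j then 1 else 0)"
    and eigdecomp: "\<forall>i\<in>{1..k}. \<forall>j\<in>{1..k}.
                     cinner (q i) (A (q j)) = (\<Sum>l=1..k. \<Omega> i l * complex_of_real (lh l) * cnj (\<Omega> j l))"
    and uD: "u \<in> D"
    and eig: "A u = lam *\<^sub>C u"
    and unorm: "norm u = 1"
  shows
    "let uh = (\<lambda>j. \<Sum>i=1..k. \<Omega> i j *\<^sub>C q i);
         Q = cspan (q ` {1..k});
         P1 = orth_proj (cspan {uh 1});
         Q2 = cspan (uh ` {2..k});
         P2 = orth_proj Q2;
         Q3 = orth_compl Q;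
         P3 = orth_proj Q3;
         P2i = (\<lambda>i. orth_proj (cspan {uh i}));
         nR = onorm (\<lambda>x. P3 (A (P1 x)) + P3 (A (P2 x)));
         nR1 = onorm (\<lambda>x. P3 (A (P1 x)));
         nR2 = onorm (\<lambda>x. P3 (A (P2 x)));
         nr = (\<lambda>i. onorm (\<lambda>x. P3 (A (P2 (P2i i x)))));
         gap = spec_dist lam (op_spectrum Q2 Q2 (\<lambda>x. P2 (A (P2 x))));
         Gap = spec_dist lam (op_spectrum Q3 (D \<inter> Q3) (\<lambda>x. P3 (A (P3 x))));
         s = sin (vangle u (uh 1));
         S2 = (\<Sum>i=2..k. (nr i)\<^sup>2 / cmod (lam - complex_of_real (lh i)));
         S1 = (\<Sum>i=2..k. nr i / cmod (lam - complex_of_real (lh i)))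
     in (Gap > 0 \<and> gap > 0 \<longrightarrow>
           s \<le> nR / Gap * sqrt (1 + nR2\<^sup>2 / gap\<^sup>2) \<and>
           nR / Gap * sqrt (1 + nR2\<^sup>2 / gap\<^sup>2) \<le> nR / Gap * (1 + nR2 / gap))
      \<and> (gap > 0 \<and> Gap > nR2\<^sup>2 / gap \<longrightarrow>
           s \<le> nR1 / (Gap - nR2\<^sup>2 / gap) * sqrt (1 + nR2\<^sup>2 / gap\<^sup>2))
      \<and> ((\<forall>i\<in>{2..k}. lam \<noteq> complex_of_real (lh i)) \<and> Gap > S2 \<longrightarrow>
           s \<le> nR1 / (Gap - S2) * sqrt (1 + S1\<^sup>2))"
  unfolding Let_def
  by (rule main[OF sa k2 qD q_orthonormal \<Omega>_unitary eigdecomp uD eig unorm refl refl refl refl refl refl refl refl refl refl refl refl refl refl refl refl refl])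

end
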